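(* Let $n\ge2$ and $M\in M_n(k)$. Identify a DG algebra automorphism $f$ of $\mathcal{A}_{\mathcal{O}_{-1}(k^n)}(M)$ with the matrix $C=(c_{ij})\in\mathrm{GL}_n(k)$ given by $f(x_i)=\sum_j c_{ij}x_j$. Under this identification, $$\mathrm{Aut}_{dg}\,\mathcal{A}_{\mathcal{O}_{-1}(k^n)}(M)=\{C=(c_{ij})_{n\times n}\in\mathrm{QPL}_n(k)\mid M=C^{-1}M(c_{ij}^2)_{n\times n}\}.$$
   Context: $k$ is an algebraically closed field of characteristic zero. For $M=(m_{ij})\in M_n(k)$, $\mathcal{A}_{\mathcal{O}_{-1}(k^n)}(M)$ is the connected cochain DG algebra whose underlying graded algebra is generated by degree-one $x_1,\dots,x_n$ subject to $x_ix_j=-x_jx_i$ ($i<j$), with differential determined by $\partial(x_i)=\sum_j m_{ij}x_j^2$ and the Leibniz rule. $\mathrm{Aut}_{dg}$ denotes the group of DG algebra automorphisms (graded algebra automorphisms commuting with the differential). $\mathrm{QPL}_n(k)$ is the group of invertible $n\times n$ matrices with exactly one nonzero entry in each row and each column; $(c_{ij}^2)$ is the matrix of entrywise squares. *)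

theory Defs
  imports "Jordan_Normal_Form.Matrix" "HOL-Computational_Algebra.Polynomial"
    "HOL-Library.Function_Algebras"
begin

text \<open>Concrete model of the graded algebra O_{-1}(k^n): an element is a finitely
 supported function from exponent vectors (monomials x_0^{a 0} ... x_{n-1}^{a (n-1)},
 variables indexed 0..n-1) to coefficients in k.\<close>

type_synonym 'a elt = "(nat \<Rightarrow> nat) \<Rightarrow> 'a"

definition alg_closed_field :: "'a::field itself \<Rightarrow> bool" where
  "alg_closed_field _ \<longleftrightarrow> (\<forall>p::'a poly. degree p > 0 \<longrightarrow> (\<exists>x. poly p x = 0))"

definition mons :: "nat \<Rightarrow> (nat \<Rightarrow> nat) set" where
  "mons n = {a. \<forall>i\<ge>n. a i = 0}"

definition carrierA :: "nat \<Rightarrow> 'a::field elt set" where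
  "carrierA n = {f. finite {a. f a \<noteq> 0} \<and> (\<forall>a. f a \<noteq> 0 \<longrightarrow> a \<in> mons n)}"

text \<open>Sign of x^a * x^b = sign * x^(a+b): each x_i in a (left) passing x_j in b with j<i.\<close>
definition skew_sign :: "nat \<Rightarrow> (nat \<Rightarrow> nat) \<Rightarrow> (nat \<Rightarrow> nat) \<Rightarrow> 'a::field" where
  "skew_sign n a b = (-1) ^ (\<Sum>i<n. \<Sum>j<i. a i * b j)"

definition skmult :: "nat \<Rightarrow> 'a::field elt \<Rightarrow> 'a elt \<Rightarrow> 'a elt" where
  "skmult n f g = (\<lambda>c. \<Sum>(a,b)\<in>{(a,b). f a \<noteq> 0 \<and> g b \<noteq> 0 \<and> (\<lambda>i. a i + b i) = c}.
      skew_sign n a b * f a * g b)"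

definition oneA :: "'a::field elt" where
  "oneA = (\<lambda>c. if c = (\<lambda>_. 0) then 1 else 0)"

definition smul :: "'a::field \<Rightarrow> 'a elt \<Rightarrow> 'a elt" where
  "smul c f = (\<lambda>a. c * f a)"

definition gen :: "nat \<Rightarrow> 'a::field elt" where
  "gen i = (\<lambda>a. if a = (\<lambda>j. if j = i then 1 else 0) then 1 else 0)"

definition degm :: "nat \<Rightarrow> (nat \<Rightarrow> nat) \<Rightarrow> nat" where
  "degm n a = (\<Sum>i<n. a i)"

definition homog :: "nat \<Rightarrow> nat \<Rightarrow> 'a::field elt \<Rightarrow> bool" where
  "homog n d f \<longleftrightarrow> (\<forall>a. f a \<noteq> 0 \<longrightarrow> degm n a = d)"

definition word :: "nat \<Rightarrow> (nat \<Rightarrow> nat) \<Rightarrow> nat list" where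
  "word n a = concat (map (\<lambda>i. replicate (a i) i) [0..<n])"

definition prodl :: "nat \<Rightarrow> nat list \<Rightarrow> 'a::field elt" where
  "prodl n ws = foldr (skmult n) (map gen ws) oneA"

definition dgen :: "nat \<Rightarrow> 'a::field mat \<Rightarrow> nat \<Rightarrow> 'a elt" where
  "dgen n M i = (\<Sum>j<n. smul (M $$ (i,j)) (skmult n (gen j) (gen j)))"

text \<open>Differential on a monomial, by the graded Leibniz rule (generators have degree 1).\<close>
definition dmono :: "nat \<Rightarrow> 'a::field mat \<Rightarrow> (nat \<Rightarrow> nat) \<Rightarrow> 'a elt" where
  "dmono n M a = (let w = word n a in
     (\<Sum>k<length w. smul ((-1) ^ k)
        (skmult n (skmult n (prodl n (take k w)) (dgen n M (w ! k))) (prodl n (drop (Suc k) w)))))"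

definition dA :: "nat \<Rightarrow> 'a::field mat \<Rightarrow> 'a elt \<Rightarrow> 'a elt" where
  "dA n M f = (\<Sum>a\<in>{a. f a \<noteq> 0}. smul (f a) (dmono n M a))"

definition graded_aut :: "nat \<Rightarrow> ('a::field elt \<Rightarrow> 'a elt) \<Rightarrow> bool" where
  "graded_aut n f \<longleftrightarrow> bij_betw f (carrierA n) (carrierA n)
     \<and> (\<forall>x\<in>carrierA n. \<forall>y\<in>carrierA n. f (x + y) = f x + f y)
     \<and> (\<forall>c. \<forall>x\<in>carrierA n. f (smul c x) = smul c (f x))
     \<and> (\<forall>x\<in>carrierA n. \<forall>y\<in>carrierA n. f (skmult n x y) = skmult n (f x) (f y))
     \<and> f oneA = oneA
     \<and> (\<forall>d. \<forall>x\<in>carrierA n. homog n d x \<longrightarrow> homog n d (f x))"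

definition Aut_dg :: "nat \<Rightarrow> 'a::field mat \<Rightarrow> ('a elt \<Rightarrow> 'a elt) set" where
  "Aut_dg n M = {f. graded_aut n f \<and> (\<forall>x\<in>carrierA n. f (dA n M x) = dA n M (f x))}"

definition QPL :: "nat \<Rightarrow> 'a::field mat \<Rightarrow> bool" where
  "QPL n C \<longleftrightarrow> C \<in> carrier_mat n n \<and> invertible_mat C
     \<and> (\<forall>i<n. \<exists>!j. j < n \<and> C $$ (i,j) \<noteq> 0)
     \<and> (\<forall>j<n. \<exists>!i. i < n \<and> C $$ (i,j) \<noteq> 0)"

definition invmat :: "'a::field mat \<Rightarrow> 'a mat" where
  "invmat C = (SOME D. inverts_mat C D \<and> inverts_mat D C)"

definition sqmat :: "'a::field mat \<Rightarrow> 'a mat" where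
  "sqmat C = mat (dim_row C) (dim_col C) (\<lambda>(i,j). (C $$ (i,j))^2)"

end

theory Submission
  imports Defs "Jordan_Normal_Form.Determinant"
begin

definition ev :: "nat \<Rightarrow> nat \<Rightarrow> nat" where "ev i = (\<lambda>k. if k = i then 1 else 0)"
definition mnm :: "(nat \<Rightarrow> nat) \<Rightarrow> 'a::field elt" where "mnm a = (\<lambda>b. if b = a then 1 else 0)"

lemma gen_mnm: "gen i = mnm (ev i)"
  unfolding gen_def mnm_def ev_def by simp

lemma sum_apply: "(\<Sum>x\<in>A. f x) b = (\<Sum>x\<in>A. f x b)"
  by (induction A rule: infinite_finite_induct) auto

lemma smul_apply: "smul c f b = c * f b" unfolding smul_def by simp

lemma mnm_apply: "mnm a b = (if b = a then 1 else 0)" unfolding mnm_def by simp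

lemma skmult_mnm: "skmult n (mnm a) (mnm b) = smul (skew_sign n a b) (mnm (\<lambda>i. a i + b i))"
proof (rule ext)
  fix c :: "nat \<Rightarrow> nat"
  show "skmult n (mnm a) (mnm b) c = smul (skew_sign n a b) (mnm (\<lambda>i. a i + b i)) c"
  proof (cases "(\<lambda>i. a i + b i) = c")
    case True
    then have S: "{(a', b'). mnm a a' \<noteq> 0 \<and> mnm b b' \<noteq> 0 \<and> (\<lambda>i. a' i + b' i) = c} = {(a,b)}"
      by (auto simp: mnm_apply)
    show ?thesis unfolding skmult_def S using True by (simp add: mnm_apply smul_apply)
  next
    case False
    then have S: "{(a', b'). mnm a a' \<noteq> 0 \<and> mnm b b' \<noteq> 0 \<and> (\<lambda>i. a' i + b' i) = c} = {}"
      by (auto simp: mnm_apply)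
    show ?thesis unfolding skmult_def S using False by (auto simp: mnm_apply smul_apply)
  qed
qed

lemma carrierA_mnm: "a \<in> mons n \<Longrightarrow> mnm a \<in> carrierA n"
  unfolding carrierA_def by (auto simp: mnm_apply)
lemma carrierA_zero: "0 \<in> carrierA n"
  unfolding carrierA_def by auto
lemma carrierA_add: "x \<in> carrierA n \<Longrightarrow> y \<in> carrierA n \<Longrightarrow> x + y \<in> carrierA n"
  unfolding carrierA_def
proof (safe, goal_cases)
  case 1
  have "{a. (x + y) a \<noteq> 0} \<subseteq> {a. x a \<noteq> 0} \<union> {a. y a \<noteq> 0}" by auto
  then show ?case using 1 finite_subset by blast
next
  case (2 a) then show ?case by (metis add.right_neutral plus_fun_apply)
qed
lemma carrierA_smul: "x \<in> carrierA n \<Longrightarrow> smul c x \<in> carrierA n"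
  unfolding carrierA_def
proof (safe, goal_cases)
  case 1
  have "{a. smul c x a \<noteq> 0} \<subseteq> {a. x a \<noteq> 0}" by (auto simp: smul_apply)
  then show ?case using 1 finite_subset by blast
next
  case (2 a) then show ?case by (auto simp: smul_apply)
qed
lemma carrierA_sum: "(\<And>i. i \<in> I \<Longrightarrow> g i \<in> carrierA n) \<Longrightarrow> (\<Sum>i\<in>I. g i) \<in> carrierA n"
  by (induction I rule: infinite_finite_induct) (auto intro: carrierA_add carrierA_zero)

lemma ev_mons: "i < n \<Longrightarrow> ev i \<in> mons n" unfolding ev_def mons_def by auto
lemma gen_carrier: "i < n \<Longrightarrow> gen i \<in> carrierA n" by (simp add: gen_mnm carrierA_mnm ev_mons)

lemma ev_inj: "ev i = ev j \<longleftrightarrow> i = j"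
  unfolding ev_def by (metis one_neq_zero)

lemma supp_finite: "x \<in> carrierA n \<Longrightarrow> finite {a. x a \<noteq> 0}"
  unfolding carrierA_def by auto
lemma supp_mons: "x \<in> carrierA n \<Longrightarrow> x a \<noteq> 0 \<Longrightarrow> a \<in> mons n"
  unfolding carrierA_def by auto

lemma skmult_alt:
  assumes "finite A" "finite B" "{a. f a \<noteq> 0} \<subseteq> A" "{b. g b \<noteq> 0} \<subseteq> B"
  shows "skmult n f g c = (\<Sum>(a,b)\<in>A \<times> B. if (\<lambda>i. a i + b i) = c then skew_sign n a b * f a * g b else 0)"
  unfolding skmult_def
proof (rule sym, rule sum.mono_neutral_cong_right)
  show "finite (A \<times> B)" using assms by auto
  show "{(a, b). f a \<noteq> 0 \<and> g b \<noteq> 0 \<and> (\<lambda>i. a i + b i) = c} \<subseteq> A \<times> B" using assms by auto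
qed (auto split: if_splits)

lemma skmult_add_left:
  assumes "x \<in> carrierA n" "y \<in> carrierA n" "z \<in> carrierA n"
  shows "skmult n (x + y) z = skmult n x z + skmult n y z"
proof (rule ext)
  fix c
  let ?A = "{a. x a \<noteq> 0} \<union> {a. y a \<noteq> 0}" and ?B = "{b. z b \<noteq> 0}"
  have fA: "finite ?A" and fB: "finite ?B" using assms supp_finite by auto
  have 1: "skmult n (x + y) z c = (\<Sum>(a,b)\<in>?A \<times> ?B. if (\<lambda>i. a i + b i) = c then skew_sign n a b * (x+y) a * z b else 0)"
    by (rule skmult_alt[OF fA fB]) (auto simp: smul_apply)
  have 2: "skmult n x z c = (\<Sum>(a,b)\<in>?A \<times> ?B. if (\<lambda>i. a i + b i) = c then skew_sign n a b * x a * z b else 0)"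
    by (rule skmult_alt[OF fA fB]) (auto simp: smul_apply)
  have 3: "skmult n y z c = (\<Sum>(a,b)\<in>?A \<times> ?B. if (\<lambda>i. a i + b i) = c then skew_sign n a b * y a * z b else 0)"
    by (rule skmult_alt[OF fA fB]) (auto simp: smul_apply)
  show "skmult n (x + y) z c = (skmult n x z + skmult n y z) c"
    unfolding plus_fun_apply 1 2 3 sum.distrib[symmetric]
    by (rule sum.cong) (auto simp: algebra_simps)
qed

lemma skmult_add_right:
  assumes "x \<in> carrierA n" "y \<in> carrierA n" "z \<in> carrierA n"
  shows "skmult n z (x + y) = skmult n z x + skmult n z y"
proof (rule ext)
  fix c
  let ?B = "{a. x a \<noteq> 0} \<union> {a. y a \<noteq> 0}" and ?A = "{b. z b \<noteq> 0}"
  have fA: "finite ?A" and fB: "finite ?B" using assms supp_finite by auto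
  have 1: "skmult n z (x + y) c = (\<Sum>(a,b)\<in>?A \<times> ?B. if (\<lambda>i. a i + b i) = c then skew_sign n a b * z a * (x+y) b else 0)"
    by (rule skmult_alt[OF fA fB]) (auto simp: smul_apply)
  have 2: "skmult n z x c = (\<Sum>(a,b)\<in>?A \<times> ?B. if (\<lambda>i. a i + b i) = c then skew_sign n a b * z a * x b else 0)"
    by (rule skmult_alt[OF fA fB]) (auto simp: smul_apply)
  have 3: "skmult n z y c = (\<Sum>(a,b)\<in>?A \<times> ?B. if (\<lambda>i. a i + b i) = c then skew_sign n a b * z a * y b else 0)"
    by (rule skmult_alt[OF fA fB]) (auto simp: smul_apply)
  show "skmult n z (x + y) c = (skmult n z x + skmult n z y) c"
    unfolding plus_fun_apply 1 2 3 sum.distrib[symmetric]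
    by (rule sum.cong) (auto simp: algebra_simps)
qed

lemma skmult_smul_left:
  assumes "x \<in> carrierA n" "z \<in> carrierA n"
  shows "skmult n (smul k x) z = smul k (skmult n x z)"
proof (rule ext)
  fix c
  let ?A = "{a. x a \<noteq> 0}" and ?B = "{b. z b \<noteq> 0}"
  have fA: "finite ?A" and fB: "finite ?B" using assms supp_finite by auto
  have 1: "skmult n (smul k x) z c = (\<Sum>(a,b)\<in>?A \<times> ?B. if (\<lambda>i. a i + b i) = c then skew_sign n a b * (smul k x) a * z b else 0)"
    by (rule skmult_alt[OF fA fB]) (auto simp: smul_apply)
  have 2: "skmult n x z c = (\<Sum>(a,b)\<in>?A \<times> ?B. if (\<lambda>i. a i + b i) = c then skew_sign n a b * x a * z b else 0)"
    by (rule skmult_alt[OF fA fB]) (auto simp: smul_apply)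
  show "skmult n (smul k x) z c = smul k (skmult n x z) c"
    unfolding smul_apply 1 2 sum_distrib_left
    by (rule sum.cong) (auto simp: algebra_simps)
qed

lemma skmult_smul_right:
  assumes "x \<in> carrierA n" "z \<in> carrierA n"
  shows "skmult n z (smul k x) = smul k (skmult n z x)"
proof (rule ext)
  fix c
  let ?B = "{a. x a \<noteq> 0}" and ?A = "{b. z b \<noteq> 0}"
  have fA: "finite ?A" and fB: "finite ?B" using assms supp_finite by auto
  have 1: "skmult n z (smul k x) c = (\<Sum>(a,b)\<in>?A \<times> ?B. if (\<lambda>i. a i + b i) = c then skew_sign n a b * z a * (smul k x) b else 0)"
    by (rule skmult_alt[OF fA fB]) (auto simp: smul_apply)
  have 2: "skmult n z x c = (\<Sum>(a,b)\<in>?A \<times> ?B. if (\<lambda>i. a i + b i) = c then skew_sign n a b * z a * x b else 0)"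
    by (rule skmult_alt[OF fA fB]) (auto simp: smul_apply)
  show "skmult n z (smul k x) c = smul k (skmult n z x) c"
    unfolding smul_apply 1 2 sum_distrib_left
    by (rule sum.cong) (auto simp: algebra_simps)
qed

lemma skmult_zero_left: "skmult n 0 z = 0"
  unfolding skmult_def by (rule ext) simp
lemma skmult_zero_right: "skmult n z 0 = 0"
  unfolding skmult_def by (rule ext) simp

lemma skmult_sum_left:
  assumes "\<And>i. i \<in> I \<Longrightarrow> g i \<in> carrierA n" "z \<in> carrierA n"
  shows "skmult n (\<Sum>i\<in>I. smul (k i) (g i)) z = (\<Sum>i\<in>I. smul (k i) (skmult n (g i) z))"
  using assms
proof (induction I rule: infinite_finite_induct)
  case (insert i I)
  have c1: "smul (k i) (g i) \<in> carrierA n" using insert by (auto intro: carrierA_smul)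
  have c2: "(\<Sum>i\<in>I. smul (k i) (g i)) \<in> carrierA n" using insert by (auto intro!: carrierA_sum carrierA_smul)
  have "skmult n (\<Sum>i\<in>insert i I. smul (k i) (g i)) z = skmult n (smul (k i) (g i) + (\<Sum>i\<in>I. smul (k i) (g i))) z"
    by (simp only: sum.insert[OF insert(1,2)])
  also have "\<dots> = smul (k i) (skmult n (g i) z) + (\<Sum>i\<in>I. smul (k i) (skmult n (g i) z))"
  proof -
    have ih: "skmult n (\<Sum>i\<in>I. smul (k i) (g i)) z = (\<Sum>i\<in>I. smul (k i) (skmult n (g i) z))" using insert by auto
    have sm: "skmult n (smul (k i) (g i)) z = smul (k i) (skmult n (g i) z)" using insert by (auto intro!: skmult_smul_left)
    show ?thesis by (simp only: skmult_add_left[OF c1 c2 insert(5)] ih sm)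
  qed
  also have "\<dots> = (\<Sum>i\<in>insert i I. smul (k i) (skmult n (g i) z))"
    by (simp only: sum.insert[OF insert(1,2)])
  finally show ?case .
qed (auto simp: skmult_zero_left)

lemma skmult_sum_right:
  assumes "\<And>i. i \<in> I \<Longrightarrow> g i \<in> carrierA n" "z \<in> carrierA n"
  shows "skmult n z (\<Sum>i\<in>I. smul (k i) (g i)) = (\<Sum>i\<in>I. smul (k i) (skmult n z (g i)))"
  using assms
proof (induction I rule: infinite_finite_induct)
  case (insert i I)
  have c1: "smul (k i) (g i) \<in> carrierA n" using insert by (auto intro: carrierA_smul)
  have c2: "(\<Sum>i\<in>I. smul (k i) (g i)) \<in> carrierA n" using insert by (auto intro!: carrierA_sum carrierA_smul)
  have "skmult n z (\<Sum>i\<in>insert i I. smul (k i) (g i)) = skmult n z (smul (k i) (g i) + (\<Sum>i\<in>I. smul (k i) (g i)))"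
    by (simp only: sum.insert[OF insert(1,2)])
  also have "\<dots> = smul (k i) (skmult n z (g i)) + (\<Sum>i\<in>I. smul (k i) (skmult n z (g i)))"
  proof -
    have ih: "skmult n z (\<Sum>i\<in>I. smul (k i) (g i)) = (\<Sum>i\<in>I. smul (k i) (skmult n z (g i)))" using insert by auto
    have sm: "skmult n z (smul (k i) (g i)) = smul (k i) (skmult n z (g i))" using insert by (auto intro!: skmult_smul_right)
    show ?thesis by (simp only: skmult_add_right[OF c1 c2 insert(5)] ih sm)
  qed
  also have "\<dots> = (\<Sum>i\<in>insert i I. smul (k i) (skmult n z (g i)))"
    by (simp only: sum.insert[OF insert(1,2)])
  finally show ?case .
qed (auto simp: skmult_zero_right)

definition lin :: "nat \<Rightarrow> (nat \<Rightarrow> 'a::field) \<Rightarrow> 'a elt" where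
  "lin n c = (\<Sum>j<n. smul (c j) (gen j))"

lemma lin_apply: "lin n c b = (\<Sum>j<n. if b = ev j then c j else 0)"
  unfolding lin_def sum_apply by (auto simp: gen_mnm mnm_apply smul_apply intro!: sum.cong)

lemma lin_ev: "j < n \<Longrightarrow> lin n c (ev j) = c j"
  unfolding lin_apply by (simp add: ev_inj)

lemma lin_other: "b \<notin> ev ` {..<n} \<Longrightarrow> lin n c b = 0"
  unfolding lin_apply by (auto intro!: sum.neutral)

lemma lin_carrier: "lin n c \<in> carrierA n"
  unfolding lin_def by (auto intro!: carrierA_sum carrierA_smul gen_carrier)

lemma lin_sum: "(\<Sum>i\<in>I. smul (v i) (lin n (w i))) = lin n (\<lambda>j. \<Sum>i\<in>I. v i * w i j)"
  unfolding lin_apply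
  apply (rule ext)
  apply (simp add: sum_apply smul_apply lin_apply sum_distrib_left)
  apply (subst sum.swap)
  apply (rule sum.cong)
   apply auto
  done

lemma smul_one: "smul 1 x = x" unfolding smul_def by simp
lemma smul_smul: "smul c (smul d x) = smul (c * d) x" unfolding smul_def by (simp add: mult.assoc)
lemma smul_sum_left: "(\<Sum>k\<in>K. smul (f k) h) = smul (\<Sum>k\<in>K. f k) h"
  by (rule ext) (simp add: sum_apply smul_apply sum_distrib_right)
lemma smul_sum_right: "smul c (\<Sum>k\<in>K. h k) = (\<Sum>k\<in>K. smul c (h k))"
  by (rule ext) (simp add: sum_apply smul_apply sum_distrib_left)
lemma smul_zero: "smul 0 x = 0" unfolding smul_def by (rule ext) simp

lemma neg1_even: "(-1::'a::ring_1)^(2*k) = 1"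
  by (simp add: power_mult)
lemma neg1_pow_eq: "x + 2*k = y + 2*l \<Longrightarrow> (-1::'a::ring_1)^x = (-1)^y"
proof -
  assume h: "x + 2*k = y + 2*l"
  have "(-1::'a)^x = (-1)^x * (-1)^(2*k)" by (simp add: neg1_even)
  also have "\<dots> = (-1)^(x + 2*k)" by (simp add: power_add)
  also have "\<dots> = (-1)^(y + 2*l)" using h by simp
  also have "\<dots> = (-1)^y" by (simp add: power_add neg1_even)
  finally show ?thesis .
qed

lemma skew_sign_one: "(\<And>i j. i < n \<Longrightarrow> j < i \<Longrightarrow> a i * b j = 0) \<Longrightarrow> skew_sign n a b = 1"
proof -
  assume h: "\<And>i j. i < n \<Longrightarrow> j < i \<Longrightarrow> a i * b j = 0"
  have *: "(\<Sum>i<n. \<Sum>j<i. a i * b j) = 0" using h by (auto intro!: sum.neutral)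
  show ?thesis unfolding skew_sign_def by (simp only: * power_0)
qed

definition tw :: "nat \<Rightarrow> nat \<Rightarrow> nat" where "tw k = (\<lambda>i. ev k i + ev k i)"

lemma skew_sign_tw_right: "skew_sign n u (tw l) = 1"
proof -
  have "(\<Sum>i<n. \<Sum>j<i. u i * tw l j) = (\<Sum>i<n. \<Sum>j<i. 2 * (u i * ev l j))"
    unfolding tw_def by (simp add: mult_2 distrib_left)
  also have "\<dots> = 2 * (\<Sum>i<n. \<Sum>j<i. u i * ev l j)" by (simp add: sum_distrib_left)
  finally have "(\<Sum>i<n. \<Sum>j<i. u i * tw l j) = 2 * (\<Sum>i<n. \<Sum>j<i. u i * ev l j)" .
  then show ?thesis unfolding skew_sign_def by (simp add: neg1_even)
qed

lemma skew_sign_tw_left: "skew_sign n (\<lambda>x. u x + tw l x) v = skew_sign n u v"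
proof -
  have "(\<Sum>i<n. \<Sum>j<i. (u i + tw l i) * v j) = (\<Sum>i<n. \<Sum>j<i. u i * v j + 2 * (ev l i * v j))"
    unfolding tw_def by (simp add: mult_2 distrib_left distrib_right)
  also have "\<dots> = (\<Sum>i<n. \<Sum>j<i. u i * v j) + 2 * (\<Sum>i<n. \<Sum>j<i. ev l i * v j)"
    by (simp add: sum_distrib_left sum.distrib)
  finally have "(\<Sum>i<n. \<Sum>j<i. (u i + tw l i) * v j) = (\<Sum>i<n. \<Sum>j<i. u i * v j) + 2 * (\<Sum>i<n. \<Sum>j<i. ev l i * v j)" .
  then show ?thesis unfolding skew_sign_def by (simp add: power_add neg1_even)
qed

lemma ev_same[simp]: "ev i i = 1" unfolding ev_def by simp

lemma ev_apply: "ev i k = (if k = i then 1 else 0)" unfolding ev_def by simp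

lemma ev_mult: "ev i a * x = (if a = i then x else 0)" unfolding ev_def by simp

lemma skew_ev_ev: "skew_sign n (ev i) (ev j) = (if j < i \<and> i < n then -1 else 1)"
proof -
  have "(\<Sum>a<n. \<Sum>b<a. ev i a * ev j b) = (\<Sum>a<n. if a = i then (if j < a then 1 else 0) else 0)"
    by (rule sum.cong) (auto simp: ev_mult ev_def sum.delta)
  also have "\<dots> = (if j < i \<and> i < n then 1 else 0)" by (simp add: sum.delta)
  finally show ?thesis unfolding skew_sign_def by simp
qed

lemma tw_eq: "(\<lambda>x. ev j x + ev l x) = tw k \<longleftrightarrow> j = k \<and> l = k"
proof
  assume h: "(\<lambda>x. ev j x + ev l x) = tw k"
  have "ev j j + ev l j = tw k j" using h by metis
  then have "j = k" unfolding tw_def ev_def by (auto split: if_splits)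
  moreover have "ev j l + ev l l = tw k l" using h by metis
  then have "l = k" unfolding tw_def ev_def by (auto split: if_splits)
  ultimately show "j = k \<and> l = k" by simp
qed (simp add: tw_def)

lemma tw_inj: "tw j = tw k \<longleftrightarrow> j = k"
  using tw_eq[of j j k] unfolding tw_def by auto

lemma tw_mons: "l < n \<Longrightarrow> tw l \<in> mons n" unfolding tw_def ev_def mons_def by auto

lemma gen_sq: "skmult n (gen l) (gen l) = mnm (tw l)"
  by (simp add: gen_mnm skmult_mnm skew_ev_ev smul_one tw_def)

lemma dgen_formula: "dgen n M i = (\<Sum>l<n. smul (M $$ (i,l)) (mnm (tw l)))"
  unfolding dgen_def gen_sq ..

lemma word_Suc: "word (Suc n) a = word n a @ replicate (a n) n"
  unfolding word_def by simp
lemma word_0: "word 0 a = []" unfolding word_def by simp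

lemma set_word: "set (word n a) \<subseteq> {..<n}"
  by (induction n) (auto simp: word_Suc word_0)

lemma sorted_word: "sorted (word n a)"
proof (induction n)
  case 0 then show ?case by (simp add: word_0)
next
  case (Suc n)
  then show ?case using set_word[of n a] by (auto simp: word_Suc sorted_append)
qed

lemma count_replicate: "count_list (replicate m x) y = (if x = y then m else 0)"
  by (induction m) auto

lemma count_word: "count_list (word n a) i = (if i < n then a i else 0)"
  by (induction n) (auto simp: word_Suc word_0 count_replicate)

lemma length_word: "length (word n a) = (\<Sum>i<n. a i)"
  by (induction n) (auto simp: word_Suc word_0)

lemma cnt_word: "a \<in> mons n \<Longrightarrow> (\<lambda>i. count_list (word n a) i) = a"
  unfolding count_word mons_def by (rule ext) auto

lemma oneA_mnm: "oneA = mnm (\<lambda>_. 0)" unfolding oneA_def mnm_def ..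

lemma prodl_sorted: "sorted ws \<Longrightarrow> set ws \<subseteq> {..<n} \<Longrightarrow> prodl n ws = mnm (\<lambda>i. count_list ws i)"
proof (induction ws)
  case Nil
  then show ?case by (simp add: prodl_def oneA_mnm)
next
  case (Cons w ws)
  have ih: "prodl n ws = (mnm (\<lambda>i. count_list ws i) :: 'a elt)" using Cons by auto
  have "prodl n (w # ws) = (skmult n (gen w) (prodl n ws) :: 'a elt)" by (simp add: prodl_def)
  also have "\<dots> = smul (skew_sign n (ev w) (\<lambda>i. count_list ws i)) (mnm (\<lambda>i. ev w i + count_list ws i))"
    by (simp add: ih gen_mnm skmult_mnm)
  also have "skew_sign n (ev w) (\<lambda>i. count_list ws i) = 1"
  proof (rule skew_sign_one)
    fix i j assume "i < n" "j < i"
    show "ev w i * count_list ws j = 0"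
    proof (cases "i = w")
      case True
      then have "j \<notin> set ws" using Cons.prems \<open>j < i\<close> by auto
      then show ?thesis by simp
    qed (simp add: ev_def)
  qed
  also have "(\<lambda>i. ev w i + count_list ws i) = (\<lambda>i. count_list (w # ws) i)"
    by (auto simp: ev_def)
  finally show ?case by (simp add: smul_one)
qed

definition upd :: "(nat \<Rightarrow> nat) \<Rightarrow> nat \<Rightarrow> nat \<Rightarrow> nat \<Rightarrow> nat" where
  "upd a i l = (\<lambda>x. a x - ev i x + tw l x)"
definition pp :: "(nat \<Rightarrow> nat) \<Rightarrow> nat \<Rightarrow> nat" where
  "pp a i = (\<Sum>j<i. a j)"
definition Gf :: "nat \<Rightarrow> 'a::field mat \<Rightarrow> (nat \<Rightarrow> nat) \<Rightarrow> nat \<Rightarrow> 'a elt" where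
  "Gf n M a i = (\<Sum>l<n. smul (M $$ (i,l)) (mnm (upd a i l)))"
definition Dm :: "nat \<Rightarrow> 'a::field mat \<Rightarrow> (nat \<Rightarrow> nat) \<Rightarrow> 'a elt" where
  "Dm n M a = (\<Sum>i<n. smul (if odd (a i) then (-1)^(pp a i) else 0) (Gf n M a i))"

lemma mons_count: "set ws \<subseteq> {..<n} \<Longrightarrow> (\<lambda>x. count_list ws x) \<in> mons n"
  unfolding mons_def by (auto intro!: count_notin)

lemma mons_add: "u \<in> mons n \<Longrightarrow> v \<in> mons n \<Longrightarrow> (\<lambda>x. u x + v x) \<in> mons n"
  unfolding mons_def by auto

lemma dmono_term:
  fixes M :: "'a::field mat"
  assumes a: "a \<in> mons n" and w: "w = word n a" and k: "k < length w"
  shows "skmult n (skmult n (prodl n (take k w)) (dgen n M (w!k))) (prodl n (drop (Suc k) w)) = Gf n M a (w!k)"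
proof -
  define u where "u = (\<lambda>x. count_list (take k w) x)"
  define v where "v = (\<lambda>x. count_list (drop (Suc k) w) x)"
  define i where "i = w ! k"
  have sw: "sorted w" and setw: "set w \<subseteq> {..<n}" using w sorted_word set_word by auto
  have st: "set (take k w) \<subseteq> {..<n}" using setw set_take_subset by fastforce
  have sd: "set (drop (Suc k) w) \<subseteq> {..<n}" using setw set_drop_subset by fastforce
  have pu: "prodl n (take k w) = (mnm u :: 'a elt)" unfolding u_def
    by (rule prodl_sorted) (use sw st in auto)
  have pv: "prodl n (drop (Suc k) w) = (mnm v :: 'a elt)" unfolding v_def
    by (rule prodl_sorted) (use sw sd in auto)
  have um: "u \<in> mons n" unfolding u_def by (rule mons_count[OF st])
  have vm: "v \<in> mons n" unfolding v_def by (rule mons_count[OF sd])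
  have dec: "u x + v x + ev i x = a x" for x
  proof -
    have "w = take k w @ i # drop (Suc k) w" unfolding i_def using id_take_nth_drop[OF k] .
    then have "count_list w x = count_list (take k w) x + count_list (i # drop (Suc k) w) x"
      by (metis count_list_append)
    moreover have "count_list w x = a x" using cnt_word[OF a] w by metis
    ultimately show ?thesis unfolding u_def v_def ev_def by auto
  qed
  have suv: "skew_sign n u v = (1::'a)"
  proof (rule skew_sign_one)
    fix x y assume "x < n" "y < x"
    show "u x * v y = 0"
    proof (rule ccontr)
      assume "u x * v y \<noteq> 0"
      then have "x \<in> set (take k w)" "y \<in> set (drop (Suc k) w)" unfolding u_def v_def
        by (auto simp: count_list_0_iff)
      moreover have "set (drop (Suc k) w) \<subseteq> set (drop k w)" by (rule set_drop_subset_set_drop) simp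
      moreover have "sorted (take k w @ drop k w)" using sw by simp
      ultimately have "x \<le> y" unfolding sorted_append by blast
      then show False using \<open>y < x\<close> by simp
    qed
  qed
  have twc: "l \<in> {..<n} \<Longrightarrow> mnm (tw l) \<in> carrierA n" for l by (simp add: carrierA_mnm tw_mons)
  have uc: "(mnm u :: 'a elt) \<in> carrierA n" by (rule carrierA_mnm[OF um])
  have vc: "(mnm v :: 'a elt) \<in> carrierA n" by (rule carrierA_mnm[OF vm])
  have "skmult n (mnm u) (dgen n M i) = (\<Sum>l<n. smul (M $$ (i,l)) (skmult n (mnm u) (mnm (tw l))))"
    unfolding dgen_formula by (rule skmult_sum_right[OF twc uc])
  also have "\<dots> = (\<Sum>l<n. smul (M $$ (i,l)) (mnm (\<lambda>x. u x + tw l x)))"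
    by (simp add: skmult_mnm skew_sign_tw_right smul_one)
  finally have s1: "skmult n (mnm u) (dgen n M i) = (\<Sum>l<n. smul (M $$ (i,l)) (mnm (\<lambda>x. u x + tw l x)))" .
  have utc: "l \<in> {..<n} \<Longrightarrow> (mnm (\<lambda>x. u x + tw l x) :: 'a elt) \<in> carrierA n" for l
    by (rule carrierA_mnm, rule mons_add[OF um tw_mons]) simp
  have "skmult n (\<Sum>l<n. smul (M $$ (i,l)) (mnm (\<lambda>x. u x + tw l x))) (mnm v)
      = (\<Sum>l<n. smul (M $$ (i,l)) (skmult n (mnm (\<lambda>x. u x + tw l x)) (mnm v)))"
    by (rule skmult_sum_left[OF utc vc])
  also have "\<dots> = (\<Sum>l<n. smul (M $$ (i,l)) (mnm (upd a i l)))"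
  proof (rule sum.cong[OF refl])
    fix l
    have "(\<lambda>x. u x + tw l x + v x) = upd a i l" unfolding upd_def
      by (rule ext) (metis dec add.commute add.left_commute add_diff_cancel_right')
    then show "smul (M $$ (i,l)) (skmult n (mnm (\<lambda>x. u x + tw l x)) (mnm v)) = smul (M $$ (i,l)) (mnm (upd a i l))"
      by (simp add: skmult_mnm skew_sign_tw_left suv smul_one)
  qed
  finally have "skmult n (skmult n (mnm u) (dgen n M i)) (mnm v) = Gf n M a i"
    unfolding s1 Gf_def .
  then show ?thesis unfolding pu pv i_def .
qed

lemma dmono_eq1:
  fixes M :: "'a::field mat"
  assumes a: "a \<in> mons n"
  shows "dmono n M a = (\<Sum>k<length (word n a). smul ((-1)^k) (Gf n M a (word n a ! k)))"
  unfolding dmono_def Let_def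
  by (rule sum.cong[OF refl]) (simp add: dmono_term[OF a refl])

lemma sum_split: "(\<Sum>k<x + (y::nat). f k) = (\<Sum>k<x. f k) + (\<Sum>k<y. f (x + k))"
  by (induction y) (auto simp: add.assoc)

lemma alt_sum: "(\<Sum>k<m. (-1::'a::ring_1)^(L + k)) = (-1)^L * (if odd m then 1 else 0)"
proof (induction m)
  case (Suc m)
  then show ?case by (cases "odd m") (auto simp: power_add)
qed simp

lemma word_parity:
  fixes H :: "nat \<Rightarrow> 'a::field elt"
  shows "(\<Sum>k<length (word n a). smul ((-1)^k) (H (word n a ! k)))
       = (\<Sum>i<n. smul (if odd (a i) then (-1)^(pp a i) else 0) (H i))"
proof (induction n)
  case 0 then show ?case by (simp add: word_0)
next
  case (Suc n)
  let ?w = "word n a" and ?r = "replicate (a n) n"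
  have "(\<Sum>k<length (word (Suc n) a). smul ((-1)^k) (H (word (Suc n) a ! k)))
      = (\<Sum>k<length ?w. smul ((-1)^k) (H ((?w @ ?r) ! k))) + (\<Sum>k<a n. smul ((-1)^(length ?w + k)) (H ((?w @ ?r) ! (length ?w + k))))"
    unfolding word_Suc length_append length_replicate sum_split ..
  also have "(\<Sum>k<length ?w. smul ((-1)^k) (H ((?w @ ?r) ! k))) = (\<Sum>k<length ?w. smul ((-1)^k) (H (?w ! k)))"
    by (rule sum.cong) (auto simp: nth_append)
  also have "(\<Sum>k<a n. smul ((-1)^(length ?w + k)) (H ((?w @ ?r) ! (length ?w + k)))) = (\<Sum>k<a n. smul ((-1)^(length ?w + k)) (H n))"
    by (rule sum.cong) (auto simp: nth_append)
  also have "\<dots> = smul ((-1)^(length ?w) * (if odd (a n) then 1 else 0)) (H n)"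
    by (simp add: smul_sum_left alt_sum)
  also have "\<dots> = smul (if odd (a n) then (-1)^(pp a n) else 0) (H n)"
    unfolding length_word pp_def by simp
  also have "(\<Sum>k<length ?w. smul ((-1)^k) (H (?w ! k))) = (\<Sum>i<n. smul (if odd (a i) then (-1)^(pp a i) else 0) (H i))"
    by (rule Suc.IH)
  finally show ?case by (simp only: sum.lessThan_Suc)
qed

lemma dmono_formula:
  fixes M :: "'a::field mat"
  assumes a: "a \<in> mons n"
  shows "dmono n M a = Dm n M a"
  unfolding dmono_eq1[OF a] word_parity Dm_def ..

lemma Dm_ev:
  fixes M :: "'a::field mat"
  assumes j: "j < n"
  shows "Dm n M (ev j) = (\<Sum>l<n. smul (M $$ (j,l)) (mnm (tw l)))"
proof -
  have "Dm n M (ev j) = (\<Sum>i<n. if i = j then Gf n M (ev j) j else 0)"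
    unfolding Dm_def by (rule sum.cong) (auto simp: ev_def pp_def smul_one smul_zero)
  also have "\<dots> = Gf n M (ev j) j" using j by simp
  also have "\<dots> = (\<Sum>l<n. smul (M $$ (j,l)) (mnm (tw l)))"
    unfolding Gf_def upd_def by simp
  finally show ?thesis .
qed

locale qpl_data =
  fixes n :: nat and \<sigma> \<sigma>' :: "nat \<Rightarrow> nat" and c :: "nat \<Rightarrow> 'a::field"
  assumes s_lt: "i < n \<Longrightarrow> \<sigma> i < n" and s'_lt: "i < n \<Longrightarrow> \<sigma>' i < n"
    and s_out: "n \<le> i \<Longrightarrow> \<sigma> i = i" and s'_out: "n \<le> i \<Longrightarrow> \<sigma>' i = i"
    and s_inv1: "\<sigma>' (\<sigma> i) = i" and s_inv2: "\<sigma> (\<sigma>' i) = i"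
    and c_nz: "i < n \<Longrightarrow> c i \<noteq> 0"
begin

lemma s_bij: "bij_betw \<sigma> {..<n} {..<n}"
  by (rule bij_betw_byWitness[where f'=\<sigma>']) (auto simp: s_inv1 s_inv2 s_lt s'_lt image_subset_iff)

lemma reidx: "(\<Sum>i<n. g (\<sigma> i)) = (\<Sum>i<n. g i)"
  using sum.reindex_bij_betw[OF s_bij] .

lemma s_inj: "\<sigma> i = \<sigma> j \<longleftrightarrow> i = j"
  by (metis s_inv1)

lemma comp_cancel1[simp]: "(u \<circ> \<sigma>') \<circ> \<sigma> = u" by (rule ext) (simp add: s_inv1)
lemma comp_cancel2[simp]: "(u \<circ> \<sigma>) \<circ> \<sigma>' = u" by (rule ext) (simp add: s_inv2)
lemma comp_eq: "b \<circ> \<sigma> = u \<longleftrightarrow> b = u \<circ> \<sigma>'" by auto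

lemma mons_comp: "u \<in> mons n \<Longrightarrow> u \<circ> \<sigma> \<in> mons n" "u \<in> mons n \<Longrightarrow> u \<circ> \<sigma>' \<in> mons n"
  unfolding mons_def by (auto simp: s_out s'_out)

lemma mons_comp_iff: "u \<circ> \<sigma> \<in> mons n \<longleftrightarrow> u \<in> mons n"
  using mons_comp by (metis comp_cancel2)

lemma degm_comp: "degm n (b \<circ> \<sigma>) = degm n b"
  unfolding degm_def using reidx[of b] by simp

definition E :: "(nat \<Rightarrow> nat) \<Rightarrow> nat" where
  "E a = (\<Sum>i<n. \<Sum>j<n. if i < j \<and> \<sigma> j < \<sigma> i then a i * a j else 0)"
definition Xc :: "(nat \<Rightarrow> nat) \<Rightarrow> (nat \<Rightarrow> nat) \<Rightarrow> nat" where
  "Xc u v = (\<Sum>i<n. \<Sum>j<n. if i < j \<and> \<sigma> j < \<sigma> i then u i * v j + v i * u j else 0)"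
definition phi :: "(nat \<Rightarrow> nat) \<Rightarrow> 'a" where
  "phi a = (\<Prod>i<n. c i ^ a i) * (-1)^(E a)"
definition F :: "'a elt \<Rightarrow> 'a elt" where
  "F x = (\<lambda>b. phi (b \<circ> \<sigma>) * x (b \<circ> \<sigma>))"

lemma E_add: "E (\<lambda>x. u x + v x) = E u + E v + Xc u v"
proof -
  have "E (\<lambda>x. u x + v x) = (\<Sum>i<n. \<Sum>j<n. (if i < j \<and> \<sigma> j < \<sigma> i then u i * u j else 0)
     + (if i < j \<and> \<sigma> j < \<sigma> i then v i * v j else 0) + (if i < j \<and> \<sigma> j < \<sigma> i then u i * v j + v i * u j else 0))"
    unfolding E_def by (intro sum.cong refl) (auto simp: algebra_simps)
  then show ?thesis unfolding E_def Xc_def by (simp add: sum.distrib)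
qed

lemma E_ev: "E (ev i) = 0"
  unfolding E_def ev_def by (auto intro!: sum.neutral)
lemma E_tw: "E (tw i) = 0"
  unfolding E_def tw_def ev_def by (auto intro!: sum.neutral)
lemma Xc_tw: "Xc u (tw l) = 2 * Xc u (ev l)"
  unfolding Xc_def tw_def sum_distrib_left
  by (intro sum.cong refl) (auto simp: algebra_simps)

lemma prod_nz: "(\<Prod>i<n. c i ^ a i) \<noteq> 0"
  using c_nz by (simp add: prod_zero_iff)

lemma phi_nz: "phi a \<noteq> 0"
  unfolding phi_def using prod_nz by simp

lemma prod_add: "(\<Prod>k<n. c k ^ (u k + v k)) = (\<Prod>k<n. c k ^ u k) * (\<Prod>k<n. c k ^ v k)"
  by (simp add: power_add prod.distrib)

lemma prod_ev: "i < n \<Longrightarrow> (\<Prod>k<n. c k ^ ev i k) = c i"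
proof -
  assume i: "i < n"
  have "(\<Prod>k<n. c k ^ ev i k) = (\<Prod>k<n. if k = i then c k else 1)"
    by (rule prod.cong) (auto simp: ev_def)
  then show ?thesis using i by (simp add: prod.delta)
qed

lemma prod_tw: "i < n \<Longrightarrow> (\<Prod>k<n. c k ^ tw i k) = c i ^ 2"
proof -
  assume i: "i < n"
  have "(\<Prod>k<n. c k ^ tw i k) = (\<Prod>k<n. c k ^ ev i k) * (\<Prod>k<n. c k ^ ev i k)"
    unfolding tw_def by (rule prod_add)
  then show ?thesis using prod_ev[OF i] by (simp add: power2_eq_square)
qed

lemma E_zero: "E (\<lambda>_. 0) = 0"
  unfolding E_def by (auto intro!: sum.neutral)
lemma phi_zero: "phi (\<lambda>_. 0) = 1"
  unfolding phi_def E_zero by simp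

lemma phi_ev: "i < n \<Longrightarrow> phi (ev i) = c i"
  unfolding phi_def E_ev by (simp add: prod_ev)

lemma F_add: "F (x + y) = F x + F y"
  unfolding F_def by (rule ext) (simp add: algebra_simps)
lemma F_smul: "F (smul k x) = smul k (F x)"
  unfolding F_def by (rule ext) (simp add: smul_apply algebra_simps)
lemma F_sum: "F (\<Sum>i\<in>I. g i) = (\<Sum>i\<in>I. F (g i))"
  unfolding F_def by (rule ext) (simp add: sum_apply sum_distrib_left)
lemma F_mnm: "F (mnm u) = smul (phi u) (mnm (u \<circ> \<sigma>'))"
  unfolding F_def by (rule ext) (auto simp: mnm_apply smul_apply)
lemma F_oneA: "F oneA = oneA"
proof -
  have "(\<lambda>_. 0::nat) \<circ> \<sigma>' = (\<lambda>_. 0)" by auto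
  then show ?thesis unfolding oneA_mnm F_mnm phi_zero smul_one by simp
qed

lemma ev_comp: "ev i \<circ> \<sigma>' = ev (\<sigma> i)"
  unfolding ev_def by (rule ext) (auto simp: s_inv2 s_inv1)
lemma tw_comp: "tw i \<circ> \<sigma>' = tw (\<sigma> i)"
  using ev_comp[of i] unfolding tw_def by (auto simp: fun_eq_iff)

lemma F_gen: "i < n \<Longrightarrow> F (gen i) = smul (c i) (gen (\<sigma> i))"
  unfolding gen_mnm F_mnm ev_comp by (simp add: phi_ev)

lemma F_apply_comp: "F x (a \<circ> \<sigma>') = phi a * x a"
  unfolding F_def by simp

lemma F_carrier: "x \<in> carrierA n \<Longrightarrow> F x \<in> carrierA n"
proof -
  assume x: "x \<in> carrierA n"
  have "{b. F x b \<noteq> 0} \<subseteq> (\<lambda>a. a \<circ> \<sigma>') ` {a. x a \<noteq> 0}"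
  proof
    fix b assume "b \<in> {b. F x b \<noteq> 0}"
    then have "x (b \<circ> \<sigma>) \<noteq> 0" unfolding F_def by auto
    then show "b \<in> (\<lambda>a. a \<circ> \<sigma>') ` {a. x a \<noteq> 0}" by (intro image_eqI[of _ _ "b \<circ> \<sigma>"]) auto
  qed
  moreover have "finite ((\<lambda>a. a \<circ> \<sigma>') ` {a. x a \<noteq> 0})" using supp_finite[OF x] by simp
  ultimately have "finite {b. F x b \<noteq> 0}" by (rule finite_subset)
  moreover have "F x b \<noteq> 0 \<Longrightarrow> b \<in> mons n" for b
  proof -
    assume "F x b \<noteq> 0"
    then have "x (b \<circ> \<sigma>) \<noteq> 0" unfolding F_def by auto
    then have "b \<circ> \<sigma> \<in> mons n" using supp_mons[OF x] by auto
    then show "b \<in> mons n" using mons_comp_iff by auto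
  qed
  ultimately show ?thesis unfolding carrierA_def by auto
qed

lemma F_bij: "bij_betw F (carrierA n) (carrierA n)"
proof -
  have inj: "inj_on F (carrierA n)"
  proof (rule inj_onI)
    fix x y assume "x \<in> carrierA n" "y \<in> carrierA n" "F x = F y"
    show "x = y"
    proof (rule ext)
      fix a
      have "F x (a \<circ> \<sigma>') = F y (a \<circ> \<sigma>')" using \<open>F x = F y\<close> by simp
      then show "x a = y a" unfolding F_apply_comp using phi_nz by simp
    qed
  qed
  have "F ` carrierA n = carrierA n"
  proof
    show "F ` carrierA n \<subseteq> carrierA n" using F_carrier by auto
    show "carrierA n \<subseteq> F ` carrierA n"
    proof
      fix y :: "'a elt" assume y: "y \<in> carrierA n"
      define x where "x = (\<lambda>a. y (a \<circ> \<sigma>') / phi a)"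
      have "F x = y" unfolding F_def x_def using phi_nz by (auto simp: fun_eq_iff)
      moreover have "x \<in> carrierA n"
      proof -
        have "{a. x a \<noteq> 0} \<subseteq> (\<lambda>b. b \<circ> \<sigma>) ` {b. y b \<noteq> 0}"
        proof
          fix a assume "a \<in> {a. x a \<noteq> 0}"
          then have "y (a \<circ> \<sigma>') \<noteq> 0" unfolding x_def by auto
          then show "a \<in> (\<lambda>b. b \<circ> \<sigma>) ` {b. y b \<noteq> 0}" by (intro image_eqI[of _ _ "a \<circ> \<sigma>'"]) auto
        qed
        moreover have "finite ((\<lambda>b. b \<circ> \<sigma>) ` {b. y b \<noteq> 0})" using supp_finite[OF y] by simp
        ultimately have "finite {a. x a \<noteq> 0}" by (rule finite_subset)
        moreover have "x a \<noteq> 0 \<Longrightarrow> a \<in> mons n" for a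
        proof -
          assume "x a \<noteq> 0"
          then have "y (a \<circ> \<sigma>') \<noteq> 0" unfolding x_def by auto
          then have "a \<circ> \<sigma>' \<in> mons n" using supp_mons[OF y] by auto
          then show "a \<in> mons n" using mons_comp_iff by (metis comp_cancel1)
        qed
        ultimately show ?thesis unfolding carrierA_def by auto
      qed
      ultimately show "y \<in> F ` carrierA n" by blast
    qed
  qed
  then show ?thesis using inj unfolding bij_betw_def by simp
qed

lemma F_homog: "homog n d x \<Longrightarrow> homog n d (F x)"
  unfolding homog_def F_def using degm_comp by auto


lemma lt_sum: "i \<le> n \<Longrightarrow> (\<Sum>j<i. f j) = (\<Sum>j<n. if j < i then f j else 0)"
proof -
  assume "i \<le> n"
  show ?thesis
    by (rule sym, rule sum.mono_neutral_cong_right) (use \<open>i \<le> n\<close> in auto)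
qed

lemma pointwise_sign:
  assumes "i < n" "j < n"
  shows "(if j < i then p else 0) + (if i < j \<and> \<sigma> j < \<sigma> i then p else 0) + (if j < i \<and> \<sigma> i < \<sigma> j then p else 0)
    = (if \<sigma> j < \<sigma> i then p else 0) + 2 * (if j < i \<and> \<sigma> i < \<sigma> j then (p::nat) else 0)"
proof -
  have "i \<noteq> j \<Longrightarrow> \<sigma> i \<noteq> \<sigma> j" using s_inj by auto
  then show ?thesis by (cases "i < j"; cases "j < i"; cases "\<sigma> i < \<sigma> j"; cases "\<sigma> j < \<sigma> i") auto
qed

lemma sign_sums:
  fixes a b :: "nat \<Rightarrow> nat"
  defines "S \<equiv> (\<Sum>i<n. \<Sum>j<i. a i * b j)"
    and "S' \<equiv> (\<Sum>i<n. \<Sum>j<i. (a \<circ> \<sigma>') i * (b \<circ> \<sigma>') j)"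
    and "K \<equiv> (\<Sum>i<n. \<Sum>j<n. if j < i \<and> \<sigma> i < \<sigma> j then a i * b j else 0)"
  shows "S + Xc a b = S' + 2 * K"
proof -
  have S: "S = (\<Sum>i<n. \<Sum>j<n. if j < i then a i * b j else 0)"
    unfolding S_def by (rule sum.cong[OF refl]) (rule lt_sum, simp)
  have "S' = (\<Sum>i<n. \<Sum>j<n. if j < i then a (\<sigma>' i) * b (\<sigma>' j) else 0)"
    unfolding S'_def comp_def by (rule sum.cong[OF refl]) (rule lt_sum, simp)
  also have "\<dots> = (\<Sum>i<n. \<Sum>j<n. if j < \<sigma> i then a (\<sigma>' (\<sigma> i)) * b (\<sigma>' j) else 0)"
    by (rule sym, rule reidx)
  also have "\<dots> = (\<Sum>i<n. \<Sum>j<n. if j < \<sigma> i then a i * b (\<sigma>' j) else 0)"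
    by (simp only: s_inv1)
  also have "\<dots> = (\<Sum>i<n. \<Sum>j<n. if \<sigma> j < \<sigma> i then a i * b j else 0)"
  proof (rule sum.cong[OF refl])
    fix i
    show "(\<Sum>j<n. if j < \<sigma> i then a i * b (\<sigma>' j) else 0) = (\<Sum>j<n. if \<sigma> j < \<sigma> i then a i * b j else 0)"
      by (rule trans[OF reidx[symmetric]]) (simp only: s_inv1)
  qed
  finally have S': "S' = \<dots>" .
  have "Xc a b = (\<Sum>i<n. \<Sum>j<n. if i < j \<and> \<sigma> j < \<sigma> i then a i * b j else 0)
      + (\<Sum>i<n. \<Sum>j<n. if i < j \<and> \<sigma> j < \<sigma> i then b i * a j else 0)"
    unfolding Xc_def sum.distrib[symmetric] by (intro sum.cong refl) auto
  also have "(\<Sum>i<n. \<Sum>j<n. if i < j \<and> \<sigma> j < \<sigma> i then b i * a j else 0)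
     = (\<Sum>i<n. \<Sum>j<n. if j < i \<and> \<sigma> i < \<sigma> j then a i * b j else 0)"
    by (rule trans[OF sum.swap]) (intro sum.cong refl, simp add: mult.commute)
  finally have X: "Xc a b = (\<Sum>i<n. \<Sum>j<n. if i < j \<and> \<sigma> j < \<sigma> i then a i * b j else 0)
      + (\<Sum>i<n. \<Sum>j<n. if j < i \<and> \<sigma> i < \<sigma> j then a i * b j else 0)" .
  have "S + Xc a b = (\<Sum>i<n. \<Sum>j<n. (if j < i then a i * b j else 0) + (if i < j \<and> \<sigma> j < \<sigma> i then a i * b j else 0)
      + (if j < i \<and> \<sigma> i < \<sigma> j then a i * b j else 0))"
    unfolding S X by (simp add: sum.distrib)
  also have "\<dots> = (\<Sum>i<n. \<Sum>j<n. (if \<sigma> j < \<sigma> i then a i * b j else 0) + 2 * (if j < i \<and> \<sigma> i < \<sigma> j then a i * b j else 0))"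
    by (intro sum.cong refl) (simp add: pointwise_sign)
  also have "\<dots> = S' + 2 * K" unfolding S' K_def by (simp add: sum.distrib sum_distrib_left)
  finally show ?thesis .
qed

lemma mult_id: "skew_sign n (a \<circ> \<sigma>') (b \<circ> \<sigma>') * phi a * phi b = phi (\<lambda>i. a i + b i) * skew_sign n a b"
proof -
  define S where "S = (\<Sum>i<n. \<Sum>j<i. a i * b j)"
  define S' where "S' = (\<Sum>i<n. \<Sum>j<i. (a \<circ> \<sigma>') i * (b \<circ> \<sigma>') j)"
  define K where "K = (\<Sum>i<n. \<Sum>j<n. if j < i \<and> \<sigma> i < \<sigma> j then a i * b j else 0)"
  have eq: "S + Xc a b = S' + 2 * K" unfolding S_def S'_def K_def by (rule sign_sums)
  have sg: "(-1::'a)^(E a + E b + Xc a b + S) = (-1)^(E a + E b + S')"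
    by (rule neg1_pow_eq[where k=0 and l=K]) (use eq in simp)
  have sg2: "(-1::'a)^S' * (-1)^(E a) * (-1)^(E b) = (-1)^(E a + E b + Xc a b) * (-1)^S"
    using sg by (simp add: power_add mult_ac)
  have "skew_sign n (a \<circ> \<sigma>') (b \<circ> \<sigma>') * phi a * phi b
     = ((\<Prod>k<n. c k ^ a k) * (\<Prod>k<n. c k ^ b k)) * ((-1::'a)^S' * (-1)^(E a) * (-1)^(E b))"
    unfolding skew_sign_def phi_def S'_def by (simp add: mult_ac)
  also have "\<dots> = ((\<Prod>k<n. c k ^ a k) * (\<Prod>k<n. c k ^ b k)) * ((-1)^(E a + E b + Xc a b) * (-1)^S)"
    by (simp only: sg2)
  also have "\<dots> = phi (\<lambda>i. a i + b i) * skew_sign n a b"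
    unfolding phi_def E_add skew_sign_def S_def prod_add by (simp add: mult_ac)
  finally show ?thesis .
qed

lemma F_mult: "F (skmult n x y) = skmult n (F x) (F y)"
proof (rule ext)
  fix c0
  define P where "P = {(a, b). x a \<noteq> 0 \<and> y b \<noteq> 0 \<and> (\<lambda>i. a i + b i) = c0 \<circ> \<sigma>}"
  define P' where "P' = {(a, b). F x a \<noteq> 0 \<and> F y b \<noteq> 0 \<and> (\<lambda>i. a i + b i) = c0}"
  define h where "h = (\<lambda>(a::nat\<Rightarrow>nat, b::nat\<Rightarrow>nat). (a \<circ> \<sigma>', b \<circ> \<sigma>'))"
  define h' where "h' = (\<lambda>(a::nat\<Rightarrow>nat, b::nat\<Rightarrow>nat). (a \<circ> \<sigma>, b \<circ> \<sigma>))"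
  have bij: "bij_betw h P P'"
  proof (rule bij_betw_byWitness[where f'=h'])
    show "\<forall>p\<in>P. h' (h p) = p" unfolding h_def h'_def by auto
    show "\<forall>p\<in>P'. h (h' p) = p" unfolding h_def h'_def by auto
    show "h ` P \<subseteq> P'"
    proof
      fix q assume "q \<in> h ` P"
      then obtain a b where ab: "(a,b) \<in> P" and q: "q = (a \<circ> \<sigma>', b \<circ> \<sigma>')" unfolding h_def by auto
      have "(\<lambda>i. (a \<circ> \<sigma>') i + (b \<circ> \<sigma>') i) = c0"
      proof
        fix i
        have eqab: "(\<lambda>i. a i + b i) = c0 \<circ> \<sigma>" using ab unfolding P_def by auto
        have "a (\<sigma>' i) + b (\<sigma>' i) = c0 (\<sigma> (\<sigma>' i))" using fun_cong[OF eqab, of "\<sigma>' i"] by simp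
        then show "(a \<circ> \<sigma>') i + (b \<circ> \<sigma>') i = c0 i" by (simp add: s_inv2)
      qed
      then show "q \<in> P'" using ab phi_nz unfolding q P_def P'_def by (simp add: F_apply_comp)
    qed
    show "h' ` P' \<subseteq> P"
    proof
      fix q assume "q \<in> h' ` P'"
      then obtain a b where ab: "(a,b) \<in> P'" and q: "q = (a \<circ> \<sigma>, b \<circ> \<sigma>)" unfolding h'_def by auto
      have "(\<lambda>i. (a \<circ> \<sigma>) i + (b \<circ> \<sigma>) i) = c0 \<circ> \<sigma>"
        using ab unfolding P'_def by auto
      moreover have "x (a \<circ> \<sigma>) \<noteq> 0" "y (b \<circ> \<sigma>) \<noteq> 0" using ab unfolding P'_def F_def by auto
      ultimately show "q \<in> P" unfolding q P_def by simp
    qed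
  qed
  have "skmult n (F x) (F y) c0 = (\<Sum>(a,b)\<in>P'. skew_sign n a b * F x a * F y b)"
    unfolding skmult_def P'_def ..
  also have "\<dots> = (\<Sum>p\<in>P. (\<lambda>(a,b). skew_sign n a b * F x a * F y b) (h p))"
    by (rule sum.reindex_bij_betw[OF bij, symmetric])
  also have "\<dots> = (\<Sum>(a,b)\<in>P. phi (c0 \<circ> \<sigma>) * (skew_sign n a b * x a * y b))"
  proof (rule sum.cong[OF refl], clarify)
    fix a b assume ab: "(a,b) \<in> P"
    then have "c0 \<circ> \<sigma> = (\<lambda>i. a i + b i)" unfolding P_def by auto
    then show "(\<lambda>(a,b). skew_sign n a b * F x a * F y b) (h (a,b)) = phi (c0 \<circ> \<sigma>) * (skew_sign n a b * x a * y b)"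
      unfolding h_def using mult_id[of a b] by (simp add: F_apply_comp mult_ac)
  qed
  also have "\<dots> = F (skmult n x y) c0"
    unfolding F_def skmult_def P_def by (simp add: sum_distrib_left case_prod_unfold)
  finally show "F (skmult n x y) c0 = skmult n (F x) (F y) c0" by simp
qed

lemma upd_comp: "upd a i l \<circ> \<sigma>' = upd (a \<circ> \<sigma>') (\<sigma> i) (\<sigma> l)"
proof (rule ext)
  fix x
  have "ev i (\<sigma>' x) = ev (\<sigma> i) x" using fun_cong[OF ev_comp[of i], of x] by simp
  moreover have "tw l (\<sigma>' x) = tw (\<sigma> l) x" using fun_cong[OF tw_comp[of l], of x] by simp
  ultimately show "(upd a i l \<circ> \<sigma>') x = upd (a \<circ> \<sigma>') (\<sigma> i) (\<sigma> l) x" unfolding upd_def by simp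
qed

lemma sum_delta_ev: "i < n \<Longrightarrow> (\<Sum>j<n. if P j then u * ev i j else 0) = (if P i then (u::nat) else 0)"
proof -
  assume i: "i < n"
  have "(\<Sum>j<n. if P j then u * ev i j else 0) = (\<Sum>j<n. if j = i then (if P i then u else 0) else 0)"
    by (rule sum.cong) (auto simp: ev_def)
  then show ?thesis using i by simp
qed

lemma Xc_ev:
  assumes i: "i < n"
  shows "Xc u (ev i) = (\<Sum>j<n. if j < i \<and> \<sigma> i < \<sigma> j then u j else 0) + (\<Sum>j<n. if i < j \<and> \<sigma> j < \<sigma> i then u j else 0)"
proof -
  have 1: "Xc u (ev i) = (\<Sum>i0<n. \<Sum>j<n. if i0 < j \<and> \<sigma> j < \<sigma> i0 then u i0 * ev i j else 0)
     + (\<Sum>i0<n. \<Sum>j<n. if i0 < j \<and> \<sigma> j < \<sigma> i0 then ev i i0 * u j else 0)"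
    unfolding Xc_def sum.distrib[symmetric] by (intro sum.cong refl) auto
  have 2: "(\<Sum>i0<n. \<Sum>j<n. if i0 < j \<and> \<sigma> j < \<sigma> i0 then u i0 * ev i j else 0)
      = (\<Sum>j<n. if j < i \<and> \<sigma> i < \<sigma> j then u j else 0)"
    by (rule sum.cong[OF refl]) (simp add: sum_delta_ev[OF i])
  have 3: "(\<Sum>i0<n. \<Sum>j<n. if i0 < j \<and> \<sigma> j < \<sigma> i0 then ev i i0 * u j else 0)
      = (\<Sum>i0<n. if i0 = i then (\<Sum>j<n. if i < j \<and> \<sigma> j < \<sigma> i then u j else 0) else 0)"
  proof (rule sum.cong[OF refl])
    fix i0
    show "(\<Sum>j<n. if i0 < j \<and> \<sigma> j < \<sigma> i0 then ev i i0 * u j else 0)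
      = (if i0 = i then (\<Sum>j<n. if i < j \<and> \<sigma> j < \<sigma> i then u j else 0) else 0)"
    proof (cases "i0 = i")
      case True then show ?thesis by (simp add: ev_apply cong: if_cong)
    next
      case False then show ?thesis by (simp add: ev_apply cong: if_cong)
    qed
  qed
  have 4: "(\<Sum>i0<n. if i0 = i then (\<Sum>j<n. if i < j \<and> \<sigma> j < \<sigma> i then u j else 0) else 0)
     = (\<Sum>j<n. if i < j \<and> \<sigma> j < \<sigma> i then u j else 0)" using i by simp
  show ?thesis unfolding 1 2 3 4 ..
qed

lemma parity_ev:
  assumes i: "i < n"
  shows "Xc u (ev i) + 2 * (\<Sum>j<n. if j < i \<and> \<sigma> j < \<sigma> i then u j else 0) = pp u i + pp (u \<circ> \<sigma>') (\<sigma> i)"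
proof -
  have p1: "pp u i = (\<Sum>j<n. if j < i then u j else 0)" unfolding pp_def by (rule lt_sum) (use i in simp)
  have "pp (u \<circ> \<sigma>') (\<sigma> i) = (\<Sum>k<n. if k < \<sigma> i then u (\<sigma>' k) else 0)"
    unfolding pp_def comp_def by (rule lt_sum) (use s_lt[OF i] in simp)
  also have "\<dots> = (\<Sum>j<n. if \<sigma> j < \<sigma> i then u (\<sigma>' (\<sigma> j)) else 0)" by (rule sym, rule reidx)
  also have "\<dots> = (\<Sum>j<n. if \<sigma> j < \<sigma> i then u j else 0)" by (simp only: s_inv1)
  finally have p2: "pp (u \<circ> \<sigma>') (\<sigma> i) = \<dots>" .
  have pw: "j < n \<Longrightarrow> (if j < i \<and> \<sigma> i < \<sigma> j then u j else 0) + (if i < j \<and> \<sigma> j < \<sigma> i then u j else 0)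
     + 2 * (if j < i \<and> \<sigma> j < \<sigma> i then u j else 0) = (if j < i then u j else 0) + (if \<sigma> j < \<sigma> i then u j else 0)" for j
  proof -
    have "i \<noteq> j \<Longrightarrow> \<sigma> i \<noteq> \<sigma> j" using s_inj by auto
    then show ?thesis by (cases "i < j"; cases "j < i"; cases "\<sigma> i < \<sigma> j"; cases "\<sigma> j < \<sigma> i") auto
  qed
  have "Xc u (ev i) + 2 * (\<Sum>j<n. if j < i \<and> \<sigma> j < \<sigma> i then u j else 0)
     = (\<Sum>j<n. (if j < i \<and> \<sigma> i < \<sigma> j then u j else 0) + (if i < j \<and> \<sigma> j < \<sigma> i then u j else 0)
     + 2 * (if j < i \<and> \<sigma> j < \<sigma> i then u j else 0))"
    unfolding Xc_ev[OF i] by (simp add: sum.distrib sum_distrib_left)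
  also have "\<dots> = (\<Sum>j<n. (if j < i then u j else 0) + (if \<sigma> j < \<sigma> i then u j else 0))"
    by (rule sum.cong[OF refl]) (simp add: pw)
  also have "\<dots> = pp u i + pp (u \<circ> \<sigma>') (\<sigma> i)" unfolding p1 p2 by (simp add: sum.distrib)
  finally show ?thesis .
qed

lemma key_scalar:
  fixes M :: "'a mat"
  assumes HM: "c i * M $$ (\<sigma> i, \<sigma> l) = M $$ (i,l) * c l ^ 2"
    and i: "i < n" and l: "l < n" and ai: "1 \<le> a i"
  shows "(-1)^(pp a i) * (M $$ (i,l) * phi (upd a i l)) = phi a * (-1)^(pp (a \<circ> \<sigma>') (\<sigma> i)) * M $$ (\<sigma> i, \<sigma> l)"
proof -
  define a' where "a' = (\<lambda>x. a x - ev i x)"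
  have ha: "a = (\<lambda>x. a' x + ev i x)" unfolding a'_def using ai by (auto simp: ev_def fun_eq_iff)
  have hu: "upd a i l = (\<lambda>x. a' x + tw l x)" unfolding upd_def a'_def ..
  define P where "P = (\<Prod>k<n. c k ^ a' k)"
  have phia: "phi a = P * c i * (-1)^(E a' + Xc a' (ev i))"
  proof -
    have "phi a = (\<Prod>k<n. c k ^ (a' k + ev i k)) * (-1)^(E (\<lambda>x. a' x + ev i x))"
      unfolding phi_def by (subst ha, subst ha) (rule refl)
    also have "\<dots> = P * c i * (-1)^(E a' + Xc a' (ev i))"
      unfolding E_add E_ev prod_add prod_ev[OF i] P_def by simp
    finally show ?thesis .
  qed
  have phiu: "phi (upd a i l) = P * c l ^ 2 * (-1)^(E a' + 2 * Xc a' (ev l))"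
    unfolding hu phi_def E_add E_tw prod_add prod_tw[OF l] P_def Xc_tw by simp
  have pp1: "pp a i = pp a' i" unfolding pp_def a'_def ev_def by simp
  have pp2: "pp (a \<circ> \<sigma>') (\<sigma> i) = pp (a' \<circ> \<sigma>') (\<sigma> i)"
    unfolding pp_def a'_def ev_def
  proof (rule sum.cong[OF refl])
    fix k assume "k \<in> {..<\<sigma> i}"
    then have "\<sigma>' k \<noteq> i" using s_inv2 by (metis lessThan_iff less_irrefl)
    then show "(a \<circ> \<sigma>') k = ((\<lambda>x. a x - (if x = i then 1 else 0)) \<circ> \<sigma>') k" by simp
  qed
  define K where "K = (\<Sum>j<n. if j < i \<and> \<sigma> j < \<sigma> i then a' j else 0)"
  have par: "Xc a' (ev i) + 2 * K = pp a' i + pp (a' \<circ> \<sigma>') (\<sigma> i)"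
    unfolding K_def by (rule parity_ev[OF i])
  have sg: "(-1::'a)^(Xc a' (ev i) + pp (a' \<circ> \<sigma>') (\<sigma> i)) = (-1)^(pp a' i)"
    by (rule neg1_pow_eq[where k=K and l="pp (a' \<circ> \<sigma>') (\<sigma> i)"]) (use par in simp)
  have e2: "(-1::'a)^(E a' + 2 * Xc a' (ev l)) = (-1)^(E a')"
    by (simp only: power_add neg1_even mult_1_right)
  have "(-1)^(pp a i) * (M $$ (i,l) * phi (upd a i l)) = (-1)^(pp a' i) * (M $$ (i,l) * (P * c l ^ 2 * (-1)^(E a')))"
    unfolding phiu pp1 e2 ..
  also have "\<dots> = P * (-1)^(E a') * ((-1)^(pp a' i) * (M $$ (i,l) * c l ^ 2))"
    by (simp only: mult_ac)
  also have "\<dots> = P * (-1)^(E a') * ((-1)^(Xc a' (ev i) + pp (a' \<circ> \<sigma>') (\<sigma> i)) * (c i * M $$ (\<sigma> i, \<sigma> l)))"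
    unfolding sg HM ..
  also have "\<dots> = P * (-1)^(E a') * ((-1)^(Xc a' (ev i)) * (-1)^(pp (a' \<circ> \<sigma>') (\<sigma> i)) * (c i * M $$ (\<sigma> i, \<sigma> l)))"
    by (simp only: power_add)
  also have "\<dots> = (P * c i * ((-1)^(E a') * (-1)^(Xc a' (ev i)))) * (-1)^(pp (a' \<circ> \<sigma>') (\<sigma> i)) * M $$ (\<sigma> i, \<sigma> l)"
    by (simp only: mult_ac)
  also have "\<dots> = phi a * (-1)^(pp (a \<circ> \<sigma>') (\<sigma> i)) * M $$ (\<sigma> i, \<sigma> l)"
    unfolding phia pp2 power_add ..
  finally show ?thesis .
qed

lemma F_Dm:
  fixes M :: "'a mat"
  assumes HM: "\<And>i l. i < n \<Longrightarrow> l < n \<Longrightarrow> c i * M $$ (\<sigma> i, \<sigma> l) = M $$ (i,l) * c l ^ 2"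
  shows "F (Dm n M a) = smul (phi a) (Dm n M (a \<circ> \<sigma>'))"
proof -
  let ?co = "\<lambda>i. if odd (a i) then (-1::'a)^(pp a i) else 0"
  let ?co' = "\<lambda>i. if odd (a i) then (-1::'a)^(pp (a \<circ> \<sigma>') (\<sigma> i)) else 0"
  have "F (Dm n M a) = (\<Sum>i<n. \<Sum>l<n. smul (?co i * (M $$ (i,l) * phi (upd a i l))) (mnm (upd a i l \<circ> \<sigma>')))"
    unfolding Dm_def Gf_def F_sum F_smul F_mnm by (simp add: smul_sum_right smul_smul)
  also have "\<dots> = (\<Sum>i<n. \<Sum>l<n. smul (phi a * ?co' i * M $$ (\<sigma> i, \<sigma> l)) (mnm (upd a i l \<circ> \<sigma>')))"
  proof (intro sum.cong refl)
    fix i l assume "i \<in> {..<n}" "l \<in> {..<n}"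
    then have il: "i < n" "l < n" by auto
    show "smul (?co i * (M $$ (i,l) * phi (upd a i l))) (mnm (upd a i l \<circ> \<sigma>')) =
          smul (phi a * ?co' i * M $$ (\<sigma> i, \<sigma> l)) (mnm (upd a i l \<circ> \<sigma>'))"
    proof (cases "odd (a i)")
      case True
      then have "1 \<le> a i" by (cases "a i") auto
      then show ?thesis using key_scalar[OF HM[OF il] il] True by simp
    qed simp
  qed
  also have "\<dots> = smul (phi a) (Dm n M (a \<circ> \<sigma>'))"
  proof -
    have "Dm n M (a \<circ> \<sigma>') = (\<Sum>i<n. smul (?co' i) (Gf n M (a \<circ> \<sigma>') (\<sigma> i)))"
      unfolding Dm_def by (rule trans[OF reidx[symmetric]]) (simp add: s_inv1)
    also have "\<dots> = (\<Sum>i<n. smul (?co' i) (\<Sum>l<n. smul (M $$ (\<sigma> i, \<sigma> l)) (mnm (upd a i l \<circ> \<sigma>'))))"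
    proof (rule sum.cong[OF refl])
      fix i
      have "Gf n M (a \<circ> \<sigma>') (\<sigma> i) = (\<Sum>l<n. smul (M $$ (\<sigma> i, \<sigma> l)) (mnm (upd (a \<circ> \<sigma>') (\<sigma> i) (\<sigma> l))))"
        unfolding Gf_def by (rule trans[OF reidx[symmetric]]) simp
      then show "smul (?co' i) (Gf n M (a \<circ> \<sigma>') (\<sigma> i)) = smul (?co' i) (\<Sum>l<n. smul (M $$ (\<sigma> i, \<sigma> l)) (mnm (upd a i l \<circ> \<sigma>')))"
        by (simp add: upd_comp)
    qed
    finally show ?thesis by (simp add: smul_sum_right smul_smul mult_ac)
  qed
  finally show ?thesis .
qed

lemma F_dA:
  fixes M :: "'a mat"
  assumes HM: "\<And>i l. i < n \<Longrightarrow> l < n \<Longrightarrow> c i * M $$ (\<sigma> i, \<sigma> l) = M $$ (i,l) * c l ^ 2"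
    and x: "x \<in> carrierA n"
  shows "F (dA n M x) = dA n M (F x)"
proof -
  let ?S = "{a. x a \<noteq> 0}" and ?S' = "{b. F x b \<noteq> 0}"
  have "F (dA n M x) = (\<Sum>a\<in>?S. smul (x a) (F (dmono n M a)))"
    unfolding dA_def F_sum F_smul ..
  also have "\<dots> = (\<Sum>a\<in>?S. smul (x a) (smul (phi a) (dmono n M (a \<circ> \<sigma>'))))"
  proof (rule sum.cong[OF refl])
    fix a assume "a \<in> ?S"
    then have am: "a \<in> mons n" using supp_mons[OF x] by auto
    have "F (dmono n M a) = F (Dm n M a)" by (simp only: dmono_formula[OF am])
    also have "\<dots> = smul (phi a) (Dm n M (a \<circ> \<sigma>'))" by (rule F_Dm[OF HM])
    also have "\<dots> = smul (phi a) (dmono n M (a \<circ> \<sigma>'))" by (simp only: dmono_formula[OF mons_comp(2)[OF am]])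
    finally show "smul (x a) (F (dmono n M a)) = smul (x a) (smul (phi a) (dmono n M (a \<circ> \<sigma>')))" by simp
  qed
  also have "\<dots> = (\<Sum>a\<in>?S. smul (F x (a \<circ> \<sigma>')) (dmono n M (a \<circ> \<sigma>')))"
  proof (rule sum.cong[OF refl])
    fix a
    show "smul (x a) (smul (phi a) (dmono n M (a \<circ> \<sigma>'))) = smul (F x (a \<circ> \<sigma>')) (dmono n M (a \<circ> \<sigma>'))"
      unfolding F_apply_comp smul_smul by (simp only: mult.commute)
  qed
  also have "\<dots> = (\<Sum>b\<in>?S'. smul (F x b) (dmono n M b))"
  proof (rule sum.reindex_bij_betw[where h="\<lambda>a. a \<circ> \<sigma>'"])
    show "bij_betw (\<lambda>a. a \<circ> \<sigma>') ?S ?S'"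
    proof (rule bij_betw_byWitness[where f'="\<lambda>b. b \<circ> \<sigma>"])
      show "(\<lambda>a. a \<circ> \<sigma>') ` ?S \<subseteq> ?S'"
      proof
        fix b assume "b \<in> (\<lambda>a. a \<circ> \<sigma>') ` ?S"
        then obtain a where "x a \<noteq> 0" "b = a \<circ> \<sigma>'" by blast
        then show "b \<in> ?S'" using phi_nz[of a] by (simp add: F_apply_comp)
      qed
      show "(\<lambda>b. b \<circ> \<sigma>) ` ?S' \<subseteq> ?S"
      proof
        fix a assume "a \<in> (\<lambda>b. b \<circ> \<sigma>) ` ?S'"
        then obtain b where "F x b \<noteq> 0" "a = b \<circ> \<sigma>" by blast
        then show "a \<in> ?S" unfolding F_def by simp
      qed
      show "\<forall>a\<in>?S. a \<circ> \<sigma>' \<circ> \<sigma> = a" by (simp only: comp_cancel1) simp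
      show "\<forall>b\<in>?S'. b \<circ> \<sigma> \<circ> \<sigma>' = b" by (simp only: comp_cancel2) simp
    qed
  qed
  also have "\<dots> = dA n M (F x)" unfolding dA_def ..
  finally show ?thesis .
qed
end


lemma mat_mult_entry:
  assumes "A \<in> carrier_mat n n" "B \<in> carrier_mat n n" "i < n" "k < n"
  shows "(A * B) $$ (i,k) = (\<Sum>j<n. A $$ (i,j) * B $$ (j,k))"
  using assms by (simp add: scalar_prod_def atLeast0LessThan)

lemma aut_zero:
  assumes "graded_aut n f" shows "f 0 = 0"
proof -
  have "f (0 + 0) = f 0 + f 0" using assms carrierA_zero unfolding graded_aut_def by blast
  then have "f 0 = f 0 + f 0" by (simp only: add_0_left)
  then show ?thesis by (metis add_cancel_right_right)
qed

lemma aut_lin_comb: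
  assumes f: "graded_aut n f" and I: "finite I" and g: "\<And>i. i \<in> I \<Longrightarrow> g i \<in> carrierA n"
  shows "f (\<Sum>i\<in>I. smul (v i) (g i)) = (\<Sum>i\<in>I. smul (v i) (f (g i)))"
  using I g
proof (induction I rule: finite_induct)
  case empty then show ?case using aut_zero[OF f] by (simp only: sum.empty)
next
  case (insert i I)
  have c1: "smul (v i) (g i) \<in> carrierA n" using insert by (auto intro: carrierA_smul)
  have c2: "(\<Sum>i\<in>I. smul (v i) (g i)) \<in> carrierA n" using insert by (auto intro!: carrierA_sum carrierA_smul)
  have "f (\<Sum>i\<in>insert i I. smul (v i) (g i)) = f (smul (v i) (g i) + (\<Sum>i\<in>I. smul (v i) (g i)))"
    by (simp only: sum.insert[OF insert(1,2)])
  also have "\<dots> = f (smul (v i) (g i)) + f (\<Sum>i\<in>I. smul (v i) (g i))"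
    using f c1 c2 unfolding graded_aut_def by blast
  also have "f (smul (v i) (g i)) = smul (v i) (f (g i))"
    using f insert(4) unfolding graded_aut_def by blast
  also have "f (\<Sum>i\<in>I. smul (v i) (g i)) = (\<Sum>i\<in>I. smul (v i) (f (g i)))"
    using insert by auto
  finally show ?case by (simp only: sum.insert[OF insert(1,2)])
qed

lemma mons_deg1:
  assumes b: "b \<in> mons n" and d: "degm n b = 1"
  shows "\<exists>j<n. b = ev j"
proof -
  have s: "(\<Sum>i<n. b i) = 1" using d unfolding degm_def .
  have "\<exists>j<n. b j \<noteq> 0"
  proof (rule ccontr)
    assume "\<not> (\<exists>j<n. b j \<noteq> 0)"
    then have "\<forall>j<n. b j = 0" by blast
    then have "(\<Sum>i<n. b i) = 0" by simp
    then show False using s by simp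
  qed
  then obtain j where j: "j < n" "b j \<noteq> 0" by blast
  have "(\<Sum>i<n. b i) = b j + (\<Sum>i\<in>{..<n} - {j}. b i)"
    using j by (simp add: sum.remove)
  then have e: "b j + (\<Sum>i\<in>{..<n} - {j}. b i) = 1" using s by simp
  then have bj: "b j = 1" and rest: "(\<Sum>i\<in>{..<n} - {j}. b i) = 0" using j(2) by linarith+
  have z: "\<And>i. i < n \<Longrightarrow> i \<noteq> j \<Longrightarrow> b i = 0" using rest by simp
  have "b = ev j"
  proof (rule ext)
    fix i
    show "b i = ev j i"
    proof (cases "i < n")
      case True then show ?thesis using z bj by (cases "i = j") (auto simp: ev_def)
    next
      case False then show ?thesis using b j unfolding mons_def ev_def by auto
    qed
  qed
  then show ?thesis using j by blast
qed

lemma deg1: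
  assumes x: "x \<in> carrierA n" and h: "homog n 1 x"
  shows "x = lin n (\<lambda>j. x (ev j))"
proof (rule ext)
  fix b
  show "x b = lin n (\<lambda>j. x (ev j)) b"
  proof (cases "b \<in> ev ` {..<n}")
    case True
    then show ?thesis by (auto simp: lin_ev)
  next
    case False
    have "x b = 0"
    proof (rule ccontr)
      assume "x b \<noteq> 0"
      then have "b \<in> mons n" "degm n b = 1" using supp_mons[OF x] h unfolding homog_def by auto
      then show False using mons_deg1 False by blast
    qed
    then show ?thesis using lin_other[OF False] by simp
  qed
qed

lemma degm_ev: "i < n \<Longrightarrow> degm n (ev i) = 1"
proof -
  assume i: "i < n"
  have "degm n (ev i) = (\<Sum>k<n. if k = i then 1 else 0)" unfolding degm_def ev_def ..
  then show ?thesis using i by simp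
qed

lemma gen_homog: "i < n \<Longrightarrow> homog n 1 (gen i)"
  unfolding homog_def gen_mnm mnm_apply using degm_ev by auto

lemma skmult_gen_gen_tw:
  assumes "j < n" "l < n"
  shows "skmult n (gen j) (gen l) (tw k) = (if j = k \<and> l = k then (1::'a::field) else 0)"
  unfolding gen_mnm skmult_mnm smul_apply mnm_apply
  using tw_eq[of j l k] by (auto simp: skew_ev_ev eq_commute[of "tw k"])


lemma skmult_lin_tw:
  fixes u v :: "nat \<Rightarrow> 'a::field"
  assumes k: "k < n"
  shows "skmult n (lin n u) (lin n v) (tw k) = u k * v k"
proof -
  have gc: "\<And>j. j \<in> {..<n} \<Longrightarrow> gen j \<in> carrierA n" by (simp add: gen_carrier)
  have "skmult n (lin n u) (lin n v) = (\<Sum>j<n. smul (u j) (skmult n (gen j) (lin n v)))"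
    unfolding lin_def[of n u] by (rule skmult_sum_left[OF gc lin_carrier])
  also have "\<dots> = (\<Sum>j<n. smul (u j) (\<Sum>l<n. smul (v l) (skmult n (gen j) (gen l))))"
    unfolding lin_def[of n v] by (intro sum.cong refl arg_cong[where f="smul _"] skmult_sum_right[OF gc gen_carrier]) auto
  finally have e: "skmult n (lin n u) (lin n v) (tw k) = (\<Sum>j<n. u j * (\<Sum>l<n. v l * skmult n (gen j) (gen l) (tw k)))"
    by (simp add: sum_apply smul_apply)
  also have "\<dots> = (\<Sum>j<n. if j = k then u k * v k else 0)"
  proof (rule sum.cong[OF refl])
    fix j assume j: "j \<in> {..<n}"
    have "(\<Sum>l<n. v l * skmult n (gen j) (gen l) (tw k)) = (\<Sum>l<n. if l = k then (if j = k then v k else 0) else 0)"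
      by (rule sum.cong[OF refl]) (use j in \<open>auto simp: skmult_gen_gen_tw\<close>)
    also have "\<dots> = (if j = k then v k else 0)" using k by simp
    finally show "u j * (\<Sum>l<n. v l * skmult n (gen j) (gen l) (tw k)) = (if j = k then u k * v k else 0)" by simp
  qed
  also have "\<dots> = u k * v k" using k by simp
  finally show ?thesis .
qed

lemma mnm_tw_sum_at:
  assumes k: "k < n"
  shows "(\<Sum>l<n. smul (h l) (mnm (tw l))) (tw k) = (h k :: 'a::field)"
proof -
  have "(\<Sum>l<n. smul (h l) (mnm (tw l))) (tw k) = (\<Sum>l<n. if l = k then h k else 0)"
    unfolding sum_apply smul_apply mnm_apply by (rule sum.cong) (auto simp: tw_inj)
  then show ?thesis using k by simp
qed

lemma mnm_tw_sum_at2: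
  assumes k: "k < n"
  shows "(\<Sum>l<n. h l * mnm (tw l) (tw k)) = (h k :: 'a::field)"
  using mnm_tw_sum_at[OF k, of h] unfolding sum_apply smul_apply .

lemma dA_gen:
  fixes M :: "'a::field mat"
  assumes i: "i < n"
  shows "dA n M (gen i) = (\<Sum>l<n. smul (M $$ (i,l)) (mnm (tw l)))"
proof -
  have S: "{a. (gen i :: 'a elt) a \<noteq> 0} = {ev i}" unfolding gen_mnm mnm_apply by auto
  have "dA n M (gen i) = dmono n M (ev i)" unfolding dA_def S by (simp add: gen_mnm mnm_apply smul_one)
  also have "\<dots> = Dm n M (ev i)" by (rule dmono_formula[OF ev_mons[OF i]])
  finally show ?thesis using Dm_ev[OF i] by simp
qed

lemma dA_lin:
  fixes M :: "'a::field mat"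
  shows "dA n M (lin n w) = (\<Sum>j<n. smul (w j) (\<Sum>l<n. smul (M $$ (j,l)) (mnm (tw l))))"
proof -
  define J where "J = {j. j < n \<and> w j \<noteq> 0}"
  have S: "{a. lin n w a \<noteq> 0} = ev ` J"
  proof
    show "{a. lin n w a \<noteq> 0} \<subseteq> ev ` J"
    proof
      fix a assume a: "a \<in> {a. lin n w a \<noteq> 0}"
      have "a \<in> ev ` {..<n}"
      proof (rule ccontr)
        assume "a \<notin> ev ` {..<n}"
        then have "lin n w a = 0" by (rule lin_other)
        then show False using a by simp
      qed
      then obtain j where j: "j < n" "a = ev j" by auto
      then have "w j \<noteq> 0" using a lin_ev[of j n w] by auto
      then show "a \<in> ev ` J" using j unfolding J_def by auto
    qed
    show "ev ` J \<subseteq> {a. lin n w a \<noteq> 0}"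
    proof
      fix a assume "a \<in> ev ` J"
      then obtain j where "j < n" "w j \<noteq> 0" "a = ev j" unfolding J_def by auto
      then show "a \<in> {a. lin n w a \<noteq> 0}" using lin_ev[of j n w] by simp
    qed
  qed
  have inj: "inj_on ev J" using ev_inj by (auto simp: inj_on_def)
  have "dA n M (lin n w) = (\<Sum>j\<in>J. smul (lin n w (ev j)) (dmono n M (ev j)))"
    unfolding dA_def S by (rule sum.reindex[OF inj, unfolded comp_def])
  also have "\<dots> = (\<Sum>j\<in>J. smul (w j) (\<Sum>l<n. smul (M $$ (j,l)) (mnm (tw l))))"
    by (rule sum.cong[OF refl]) (auto simp: J_def lin_ev dmono_formula ev_mons Dm_ev)
  also have "\<dots> = (\<Sum>j<n. smul (w j) (\<Sum>l<n. smul (M $$ (j,l)) (mnm (tw l))))"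
    by (rule sum.mono_neutral_left) (auto simp: J_def smul_zero)
  finally show ?thesis .
qed


lemma lin_cong: "(\<And>j. j < n \<Longrightarrow> c j = d j) \<Longrightarrow> lin n c = lin n d"
  unfolding lin_def by (rule sum.cong) auto

lemma lin_zero: "lin n (\<lambda>_. 0) = (0 :: 'a::field elt)"
  unfolding lin_def by (simp add: smul_zero)

lemma invmat_props:
  fixes C :: "'a::field mat"
  assumes C: "C \<in> carrier_mat n n" and inv: "invertible_mat C"
  shows "invmat C \<in> carrier_mat n n" "C * invmat C = 1\<^sub>m n" "invmat C * C = 1\<^sub>m n"
proof -
  have ex: "\<exists>D. inverts_mat C D \<and> inverts_mat D C" using inv unfolding invertible_mat_def by auto
  have D: "inverts_mat C (invmat C) \<and> inverts_mat (invmat C) C"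
    unfolding invmat_def by (rule someI_ex[OF ex])
  then have CD: "C * invmat C = 1\<^sub>m n" and DC: "invmat C * C = 1\<^sub>m (dim_row (invmat C))"
    using C unfolding inverts_mat_def by auto
  have c1: "dim_col (invmat C) = n" using arg_cong[OF CD, of dim_col] by simp
  have r1: "dim_row (invmat C) = n" using arg_cong[OF DC, of dim_col] C by simp
  show "invmat C \<in> carrier_mat n n" using c1 r1 by auto
  show "C * invmat C = 1\<^sub>m n" by (rule CD)
  show "invmat C * C = 1\<^sub>m n" using DC r1 by simp
qed

lemma det_nz_invertible:
  fixes C :: "'a::field mat"
  assumes C: "C \<in> carrier_mat n n" and d: "det C \<noteq> 0"
  shows "invertible_mat C"
proof -
  have "C \<in> Units (ring_mat TYPE('a) n ())" by (rule det_non_zero_imp_unit[OF C d])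
  then obtain B where B: "B \<in> carrier_mat n n" "B * C = 1\<^sub>m n" "C * B = 1\<^sub>m n"
    unfolding Units_def ring_mat_def by auto
  show ?thesis unfolding invertible_mat_def inverts_mat_def using B C by auto
qed

lemma forward:
  fixes M C :: "'a::field_char_0 mat"
  assumes M: "M \<in> carrier_mat n n" and C: "C \<in> carrier_mat n n" and f: "f \<in> Aut_dg n M"
    and fg: "\<forall>i<n. f (gen i) = (\<Sum>j<n. smul (C $$ (i,j)) (gen j))"
  shows "QPL n C \<and> M = invmat C * M * sqmat C"
proof -
  have ga: "graded_aut n f" and comm: "\<And>x. x \<in> carrierA n \<Longrightarrow> f (dA n M x) = dA n M (f x)"
    using f unfolding Aut_dg_def by auto
  have fadd: "\<And>x y. x \<in> carrierA n \<Longrightarrow> y \<in> carrierA n \<Longrightarrow> f (x + y) = f x + f y"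
    using ga unfolding graded_aut_def by blast
  have fmult: "\<And>x y. x \<in> carrierA n \<Longrightarrow> y \<in> carrierA n \<Longrightarrow> f (skmult n x y) = skmult n (f x) (f y)"
    using ga unfolding graded_aut_def by blast
  have fbij: "bij_betw f (carrierA n) (carrierA n)" using ga unfolding graded_aut_def by blast
  define r where "r = (\<lambda>i j. C $$ (i,j))"
  have fgl: "\<And>i. i < n \<Longrightarrow> f (gen i) = lin n (r i)" using fg unfolding lin_def r_def by auto
  have ggc: "\<And>i j. i < n \<Longrightarrow> j < n \<Longrightarrow> skmult n (gen i) (gen j) \<in> carrierA n"
    by (simp add: gen_mnm skmult_mnm carrierA_smul carrierA_mnm mons_add ev_mons)
  have col: "r i k * r j k = 0" if ij: "i < n" "j < n" "i \<noteq> j" and k: "k < n" for i j k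
  proof -
    have comm_ev: "(\<lambda>x. ev j x + ev i x) = (\<lambda>x. ev i x + ev j x)" by (simp add: add.commute)
    have anti: "skmult n (gen i) (gen j) + skmult n (gen j) (gen i) = (0 :: 'a elt)"
    proof (rule ext)
      fix b
      have "skew_sign n (ev i) (ev j) + skew_sign n (ev j) (ev i) = (0::'a)"
        using ij by (cases "i < j") (auto simp: skew_ev_ev)
      then show "(skmult n (gen i) (gen j) + skmult n (gen j) (gen i)) b = (0 :: 'a elt) b"
        unfolding gen_mnm skmult_mnm comm_ev plus_fun_apply smul_apply
        by (simp add: distrib_right[symmetric])
    qed
    have h0: "f (skmult n (gen i) (gen j)) + f (skmult n (gen j) (gen i)) = f 0"
      using fadd[OF ggc[OF ij(1,2)] ggc[OF ij(2,1)]] anti by simp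
    have e1: "f (skmult n (gen i) (gen j)) = skmult n (lin n (r i)) (lin n (r j))"
      using fmult[OF gen_carrier[OF ij(1)] gen_carrier[OF ij(2)]] fgl ij by simp
    have e2: "f (skmult n (gen j) (gen i)) = skmult n (lin n (r j)) (lin n (r i))"
      using fmult[OF gen_carrier[OF ij(2)] gen_carrier[OF ij(1)]] fgl ij by simp
    have "skmult n (lin n (r i)) (lin n (r j)) + skmult n (lin n (r j)) (lin n (r i)) = 0"
      using h0 unfolding e1 e2 aut_zero[OF ga] .
    then have "(skmult n (lin n (r i)) (lin n (r j)) + skmult n (lin n (r j)) (lin n (r i))) (tw k) = 0"
      by simp
    then have "r i k * r j k + r j k * r i k = 0" unfolding plus_fun_apply skmult_lin_tw[OF k] .
    then have "2 * (r i k * r j k) = 0" by (metis mult.commute mult_2)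
    then show ?thesis by simp
  qed
  have inv: "invertible_mat C"
  proof (rule ccontr)
    assume ninv: "\<not> invertible_mat C"
    have "det C = 0" using det_nz_invertible[OF C] ninv by blast
    then have "det (transpose_mat C) = 0" using det_transpose[OF C] by simp
    then obtain v where v: "v \<in> carrier_vec n" "v \<noteq> 0\<^sub>v n" "transpose_mat C *\<^sub>v v = 0\<^sub>v n"
      using det_0_iff_vec_prod_zero_field[of "transpose_mat C" n] C by auto
    have vz: "(\<Sum>i<n. v $ i * r i j) = 0" if j: "j < n" for j
    proof -
      have "(transpose_mat C *\<^sub>v v) $ j = 0" using v j by simp
      then have "col C j \<bullet> v = 0" using j C by simp
      then show ?thesis using v C j unfolding scalar_prod_def r_def
        by (simp add: atLeast0LessThan mult.commute)
    qed
    have "f (lin n (\<lambda>i. v $ i)) = (\<Sum>i<n. smul (v $ i) (f (gen i)))"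
      unfolding lin_def by (rule aut_lin_comb[OF ga]) (auto simp: gen_carrier)
    also have "\<dots> = (\<Sum>i<n. smul (v $ i) (lin n (r i)))" by (rule sum.cong) (auto simp: fgl)
    also have "\<dots> = lin n (\<lambda>j. \<Sum>i<n. v $ i * r i j)" by (rule lin_sum)
    also have "\<dots> = lin n (\<lambda>_. 0)" by (rule lin_cong) (rule vz)
    also have "\<dots> = f 0" by (simp add: lin_zero aut_zero[OF ga])
    finally have "f (lin n (\<lambda>i. v $ i)) = f 0" .
    then have "lin n (\<lambda>i. v $ i) = 0"
      using fbij lin_carrier carrierA_zero unfolding bij_betw_def inj_on_def by blast
    then have "v = 0\<^sub>v n"
    proof -
      assume l0: "lin n (\<lambda>i. v $ i) = 0"
      show "v = 0\<^sub>v n"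
      proof (rule eq_vecI)
        fix i assume "i < dim_vec (0\<^sub>v n :: 'a vec)"
        then have i: "i < n" by simp
        have "lin n (\<lambda>i. v $ i) (ev i) = 0" using l0 by simp
        moreover have "lin n (\<lambda>i. v $ i) (ev i) = v $ i" by (rule lin_ev[OF i])
        ultimately show "v $ i = 0\<^sub>v n $ i" using i by simp
      qed (use v in simp)
    qed
    then show False using v by simp
  qed
  note Dp = invmat_props[OF C inv]
  have rownz: "\<exists>j<n. r i j \<noteq> 0" if i: "i < n" for i
  proof (rule ccontr)
    assume "\<not> (\<exists>j<n. r i j \<noteq> 0)"
    then have "(C * invmat C) $$ (i,i) = 0" using mat_mult_entry[OF C Dp(1) i i] unfolding r_def by simp
    then show False using Dp(2) i by simp
  qed
  have colnz: "\<exists>i<n. r i j \<noteq> 0" if j: "j < n" for j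
  proof (rule ccontr)
    assume "\<not> (\<exists>i<n. r i j \<noteq> 0)"
    then have "(invmat C * C) $$ (j,j) = 0" using mat_mult_entry[OF Dp(1) C j j] unfolding r_def by simp
    then show False using Dp(3) j by simp
  qed
  have colu: "\<exists>!i. i < n \<and> r i j \<noteq> 0" if j: "j < n" for j
    using colnz[OF j] col j by (metis mult_eq_0_iff)
  define rr where "rr = (\<lambda>j. THE i. i < n \<and> r i j \<noteq> 0)"
  have rr: "rr j < n \<and> r (rr j) j \<noteq> 0" if "j < n" for j
    unfolding rr_def using theI'[OF colu[OF that]] .
  have rr_eq: "rr j = i" if "j < n" "i < n" "r i j \<noteq> 0" for i j
    unfolding rr_def using the1_equality[OF colu[OF that(1)]] that by auto
  have "rr ` {..<n} = {..<n}"
  proof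
    show "rr ` {..<n} \<subseteq> {..<n}" using rr by auto
    show "{..<n} \<subseteq> rr ` {..<n}"
    proof
      fix i assume "i \<in> {..<n}"
      then obtain j where "j < n" "r i j \<noteq> 0" using rownz by auto
      then show "i \<in> rr ` {..<n}" using rr_eq \<open>i \<in> {..<n}\<close> by (metis imageI lessThan_iff)
    qed
  qed
  then have rr_inj: "inj_on rr {..<n}" by (intro eq_card_imp_inj_on) auto
  have rowu: "\<exists>!j. j < n \<and> r i j \<noteq> 0" if i: "i < n" for i
  proof -
    obtain j where j: "j < n" "r i j \<noteq> 0" using rownz[OF i] by auto
    show ?thesis
    proof (rule ex1I[of _ j])
      show "j < n \<and> r i j \<noteq> 0" using j by simp
      fix j' assume j': "j' < n \<and> r i j' \<noteq> 0"
      have "rr j' = i" "rr j = i" using rr_eq j j' i by auto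
      then show "j' = j" using rr_inj j j' unfolding inj_on_def by auto
    qed
  qed
  have qpl: "QPL n C" unfolding QPL_def using C inv rowu colu unfolding r_def by auto
  have sq: "sqmat C \<in> carrier_mat n n" using C unfolding sqmat_def by auto
  have rel: "(M * sqmat C) $$ (i,k) = (C * M) $$ (i,k)" if i: "i < n" and k: "k < n" for i k
  proof -
    have mc: "\<And>l. l \<in> {..<n} \<Longrightarrow> (mnm (tw l) :: 'a elt) \<in> carrierA n" by (simp add: carrierA_mnm tw_mons)
    have "f (dA n M (gen i)) = (\<Sum>l<n. smul (M $$ (i,l)) (f (mnm (tw l))))"
      unfolding dA_gen[OF i] by (rule aut_lin_comb[OF ga _ mc]) simp
    also have "\<dots> = (\<Sum>l<n. smul (M $$ (i,l)) (skmult n (lin n (r l)) (lin n (r l))))"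
    proof (rule sum.cong[OF refl])
      fix l assume "l \<in> {..<n}"
      then have l: "l < n" by simp
      have "f (mnm (tw l)) = skmult n (lin n (r l)) (lin n (r l))"
        using fmult[OF gen_carrier[OF l] gen_carrier[OF l]] fgl[OF l] by (simp add: gen_sq)
      then show "smul (M $$ (i,l)) (f (mnm (tw l))) = smul (M $$ (i,l)) (skmult n (lin n (r l)) (lin n (r l)))" by simp
    qed
    finally have L0: "f (dA n M (gen i)) = (\<Sum>l<n. smul (M $$ (i,l)) (skmult n (lin n (r l)) (lin n (r l))))" .
    have L: "f (dA n M (gen i)) (tw k) = (\<Sum>l<n. M $$ (i,l) * (r l k * r l k))"
      unfolding L0 sum_apply smul_apply by (rule sum.cong[OF refl]) (simp add: skmult_lin_tw[OF k])
    have R: "dA n M (f (gen i)) (tw k) = (\<Sum>j<n. r i j * M $$ (j,k))"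
      unfolding fgl[OF i] dA_lin sum_apply smul_apply mnm_tw_sum_at2[OF k] ..
    have "(\<Sum>l<n. M $$ (i,l) * (r l k * r l k)) = (\<Sum>j<n. r i j * M $$ (j,k))"
      using L R comm[OF gen_carrier[OF i]] by simp
    moreover have "(M * sqmat C) $$ (i,k) = (\<Sum>l<n. M $$ (i,l) * (r l k * r l k))"
      unfolding mat_mult_entry[OF M sq i k] using C k unfolding sqmat_def r_def
      by (intro sum.cong refl) (auto simp: power2_eq_square)
    moreover have "(C * M) $$ (i,k) = (\<Sum>j<n. r i j * M $$ (j,k))"
      unfolding mat_mult_entry[OF C M i k] r_def ..
    ultimately show ?thesis by simp
  qed
  have MS: "M * sqmat C = C * M"
    by (rule eq_matI) (use rel M C sq in auto)
  have "invmat C * M * sqmat C = invmat C * (M * sqmat C)" using Dp(1) M sq by simp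
  also have "\<dots> = invmat C * (C * M)" unfolding MS ..
  also have "\<dots> = (invmat C * C) * M" using Dp(1) M C by simp
  also have "\<dots> = M" using Dp(3) M by simp
  finally show ?thesis using qpl by simp
qed


lemma backward:
  fixes M C :: "'a::field_char_0 mat"
  assumes M: "M \<in> carrier_mat n n" and Q: "QPL n C" and E: "M = invmat C * M * sqmat C"
  shows "\<exists>f\<in>Aut_dg n M. \<forall>i<n. f (gen i) = (\<Sum>j<n. smul (C $$ (i,j)) (gen j))"
proof -
  have C: "C \<in> carrier_mat n n" and inv: "invertible_mat C"
    and rowu: "\<And>i. i < n \<Longrightarrow> \<exists>!j. j < n \<and> C $$ (i,j) \<noteq> 0"
    and colu: "\<And>j. j < n \<Longrightarrow> \<exists>!i. i < n \<and> C $$ (i,j) \<noteq> 0"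
    using Q unfolding QPL_def by auto
  note Dp = invmat_props[OF C inv]
  have sq: "sqmat C \<in> carrier_mat n n" using C unfolding sqmat_def by auto
  have CM: "C * M = M * sqmat C"
  proof -
    have "C * M = C * (invmat C * M * sqmat C)" using E by simp
    also have "\<dots> = C * (invmat C * (M * sqmat C))" using Dp(1) M sq by simp
    also have "\<dots> = (C * invmat C) * (M * sqmat C)"
      using C Dp(1) mult_carrier_mat[OF M sq] by (simp only: assoc_mult_mat)
    also have "\<dots> = M * sqmat C" unfolding Dp(2) by (rule left_mult_one_mat[OF mult_carrier_mat[OF M sq]])
    finally show ?thesis .
  qed
  define \<sigma> where "\<sigma> = (\<lambda>i. if i < n then (THE j. j < n \<and> C $$ (i,j) \<noteq> 0) else i)"
  define \<sigma>' where "\<sigma>' = (\<lambda>j. if j < n then (THE i. i < n \<and> C $$ (i,j) \<noteq> 0) else j)"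
  define c where "c = (\<lambda>i. C $$ (i, \<sigma> i))"
  have s1: "\<sigma> i < n \<and> C $$ (i, \<sigma> i) \<noteq> 0" if "i < n" for i
    unfolding \<sigma>_def using theI'[OF rowu[OF that]] that by simp
  have s2: "\<sigma>' j < n \<and> C $$ (\<sigma>' j, j) \<noteq> 0" if "j < n" for j
    unfolding \<sigma>'_def using theI'[OF colu[OF that]] that by simp
  have row0: "C $$ (i,j) = 0" if "i < n" "j < n" "j \<noteq> \<sigma> i" for i j
    using rowu[OF that(1)] s1[OF that(1)] that by blast
  have col0: "C $$ (i,j) = 0" if "i < n" "j < n" "i \<noteq> \<sigma>' j" for i j
    using colu[OF that(2)] s2[OF that(2)] that by blast
  have inv1: "\<sigma>' (\<sigma> i) = i" for i
  proof (cases "i < n")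
    case True
    then have "\<sigma> i < n" "C $$ (i, \<sigma> i) \<noteq> 0" using s1 by auto
    then show ?thesis using col0 True by (metis s2)
  qed (simp add: \<sigma>_def \<sigma>'_def)
  have inv2: "\<sigma> (\<sigma>' j) = j" for j
  proof (cases "j < n")
    case True
    then have "\<sigma>' j < n" "C $$ (\<sigma>' j, j) \<noteq> 0" using s2 by auto
    then show ?thesis using row0 True by (metis s1)
  qed (simp add: \<sigma>_def \<sigma>'_def)
  interpret I: qpl_data n \<sigma> \<sigma>' c
  proof
    show "\<And>i. i < n \<Longrightarrow> \<sigma> i < n" using s1 by blast
    show "\<And>i. i < n \<Longrightarrow> \<sigma>' i < n" using s2 by blast
    show "\<And>i. n \<le> i \<Longrightarrow> \<sigma> i = i" unfolding \<sigma>_def by simp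
    show "\<And>i. n \<le> i \<Longrightarrow> \<sigma>' i = i" unfolding \<sigma>'_def by simp
    show "\<And>i. \<sigma>' (\<sigma> i) = i" by (rule inv1)
    show "\<And>i. \<sigma> (\<sigma>' i) = i" by (rule inv2)
    show "\<And>i. i < n \<Longrightarrow> c i \<noteq> 0" unfolding c_def using s1 by blast
  qed
  have HM: "c i * M $$ (\<sigma> i, \<sigma> l) = M $$ (i,l) * c l ^ 2" if i: "i < n" and l: "l < n" for i l
  proof -
    have sl: "\<sigma> l < n" using s1[OF l] by simp
    have "(C * M) $$ (i, \<sigma> l) = (\<Sum>j<n. C $$ (i,j) * M $$ (j, \<sigma> l))" by (rule mat_mult_entry[OF C M i sl])
    also have "\<dots> = (\<Sum>j<n. if j = \<sigma> i then c i * M $$ (\<sigma> i, \<sigma> l) else 0)"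
      by (rule sum.cong[OF refl]) (auto simp: c_def row0 i)
    also have "\<dots> = c i * M $$ (\<sigma> i, \<sigma> l)" using s1[OF i] by simp
    finally have 1: "(C * M) $$ (i, \<sigma> l) = c i * M $$ (\<sigma> i, \<sigma> l)" .
    have "(M * sqmat C) $$ (i, \<sigma> l) = (\<Sum>j<n. M $$ (i,j) * sqmat C $$ (j, \<sigma> l))" by (rule mat_mult_entry[OF M sq i sl])
    also have "\<dots> = (\<Sum>j<n. if j = l then M $$ (i,l) * c l ^ 2 else 0)"
    proof (rule sum.cong[OF refl])
      fix j assume "j \<in> {..<n}"
      then have j: "j < n" by simp
      have sqe: "sqmat C $$ (j, \<sigma> l) = (C $$ (j, \<sigma> l))^2" using C j sl unfolding sqmat_def by simp
      show "M $$ (i,j) * sqmat C $$ (j, \<sigma> l) = (if j = l then M $$ (i,l) * c l ^ 2 else 0)"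
      proof (cases "j = l")
        case True then show ?thesis using sqe by (simp add: c_def)
      next
        case False
        then have "j \<noteq> \<sigma>' (\<sigma> l)" using inv1 by simp
        then have "C $$ (j, \<sigma> l) = 0" using col0 j sl by blast
        then show ?thesis using sqe False by simp
      qed
    qed
    also have "\<dots> = M $$ (i,l) * c l ^ 2" using l by simp
    finally have 2: "(M * sqmat C) $$ (i, \<sigma> l) = M $$ (i,l) * c l ^ 2" .
    show ?thesis using 1 2 CM by simp
  qed
  have Faut: "I.F \<in> Aut_dg n M"
    unfolding Aut_dg_def graded_aut_def
    using I.F_bij I.F_add I.F_smul I.F_mult I.F_oneA I.F_homog I.F_dA[OF HM] by auto
  have Fgen: "I.F (gen i) = (\<Sum>j<n. smul (C $$ (i,j)) (gen j))" if i: "i < n" for i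
  proof -
    have "(\<Sum>j<n. smul (C $$ (i,j)) (gen j)) = (\<Sum>j<n. if j = \<sigma> i then smul (c i) (gen (\<sigma> i)) else 0)"
      by (rule sum.cong[OF refl]) (auto simp: c_def row0 i smul_zero)
    also have "\<dots> = smul (c i) (gen (\<sigma> i))" using s1[OF i] by simp
    finally show ?thesis using I.F_gen[OF i] by simp
  qed
  show ?thesis using Faut Fgen by blast
qed

theorem corollary3p7:
  fixes M :: "'a::field_char_0 mat" and n :: nat
  assumes "alg_closed_field TYPE('a)"
    and "n \<ge> 2"
    and "M \<in> carrier_mat n n"
  shows "(\<forall>f\<in>Aut_dg n M. \<exists>C\<in>carrier_mat n n.
            \<forall>i<n. f (gen i) = (\<Sum>j<n. smul (C $$ (i,j)) (gen j)))
       \<and> {C \<in> carrier_mat n n. \<exists>f\<in>Aut_dg n M.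
            \<forall>i<n. f (gen i) = (\<Sum>j<n. smul (C $$ (i,j)) (gen j))}
         = {C. QPL n C \<and> M = invmat C * M * sqmat C}"
proof (intro conjI)
  have M: "M \<in> carrier_mat n n" by fact
  show "\<forall>f\<in>Aut_dg n M. \<exists>C\<in>carrier_mat n n. \<forall>i<n. f (gen i) = (\<Sum>j<n. smul (C $$ (i,j)) (gen j))"
  proof
    fix f assume f: "f \<in> Aut_dg n M"
    then have ga: "graded_aut n f" unfolding Aut_dg_def by auto
    define C where "C = mat n n (\<lambda>(i,j). f (gen i) (ev j))"
    have "\<forall>i<n. f (gen i) = (\<Sum>j<n. smul (C $$ (i,j)) (gen j))"
    proof (intro allI impI)
      fix i assume i: "i < n"
      have fc: "f (gen i) \<in> carrierA n"
        using ga gen_carrier[OF i] unfolding graded_aut_def bij_betw_def by blast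
      have fh: "homog n 1 (f (gen i))"
        using ga gen_carrier[OF i] gen_homog[OF i] unfolding graded_aut_def by blast
      have "f (gen i) = lin n (\<lambda>j. f (gen i) (ev j))" by (rule deg1[OF fc fh])
      also have "\<dots> = lin n (\<lambda>j. C $$ (i,j))" by (rule lin_cong) (simp add: C_def i)
      finally show "f (gen i) = (\<Sum>j<n. smul (C $$ (i,j)) (gen j))" unfolding lin_def .
    qed
    moreover have "C \<in> carrier_mat n n" unfolding C_def by simp
    ultimately show "\<exists>C\<in>carrier_mat n n. \<forall>i<n. f (gen i) = (\<Sum>j<n. smul (C $$ (i,j)) (gen j))" by blast
  qed
  show "{C \<in> carrier_mat n n. \<exists>f\<in>Aut_dg n M. \<forall>i<n. f (gen i) = (\<Sum>j<n. smul (C $$ (i,j)) (gen j))}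
         = {C. QPL n C \<and> M = invmat C * M * sqmat C}"
  proof
    show "{C \<in> carrier_mat n n. \<exists>f\<in>Aut_dg n M. \<forall>i<n. f (gen i) = (\<Sum>j<n. smul (C $$ (i,j)) (gen j))}
         \<subseteq> {C. QPL n C \<and> M = invmat C * M * sqmat C}"
      using forward[OF M] by blast
    show "{C. QPL n C \<and> M = invmat C * M * sqmat C} \<subseteq>
          {C \<in> carrier_mat n n. \<exists>f\<in>Aut_dg n M. \<forall>i<n. f (gen i) = (\<Sum>j<n. smul (C $$ (i,j)) (gen j))}"
    proof
      fix C assume "C \<in> {C. QPL n C \<and> M = invmat C * M * sqmat C}"
      then have Q: "QPL n C" and E: "M = invmat C * M * sqmat C" by auto
      have "C \<in> carrier_mat n n" using Q unfolding QPL_def by auto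
      then show "C \<in> {C \<in> carrier_mat n n. \<exists>f\<in>Aut_dg n M. \<forall>i<n. f (gen i) = (\<Sum>j<n. smul (C $$ (i,j)) (gen j))}"
        using backward[OF M Q E] by blast
    qed
  qed
qed

end
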